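(* Let $G$ be a group and let $\mathrm{A}(G)$ be the kernel of $\epsilon\colon\mathrm{Gr}(\mathrm{Pq}(G))\to G$. Then there is an exact sequence of abelian groups \[ \mathrm{H}_2(G;\mathbb{Z})\longrightarrow\mathrm{A}(G)\longrightarrow\mathrm{B}(G)\longrightarrow\mathrm{H}_1(G;\mathbb{Z})\longrightarrow 0, \] where $\mathrm{B}(G)$ is the quotient of the free abelian group $\mathbb{Z}\mathrm{Cl}(G)$ on the set $\mathrm{Cl}(G)$ of conjugacy classes of elements of $G$ by the relations $n[a]=[a^n]$ for all $a\in G$ and all $n\in\mathbb{Z}$.
   Context: For a group $G$, $\mathrm{Pq}(G)$ is the power quandle on the underlying set of $G$ with $a\rhd b=aba^{-1}$, $\pi^n(a)=a^n$ ($n\in\mathbb{Z}$), and unit the identity $e$. $\mathrm{Gr}(\mathrm{Pq}(G))$ is the group with generators $\sigma(a)$, $a\in G$, and relations $\sigma(aba^{-1})=\sigma(a)\sigma(b)\sigma(a)^{-1}$, $\sigma(a^n)=\sigma(a)^n$, $\sigma(e)=1$ for all $a,b\in G$, $n\in\mathbb{Z}$. $\epsilon\colon\mathrm{Gr}(\mathrm{Pq}(G))\to G$ is the surjective homomorphism with $\epsilon(\sigma(a))=a$; its kernel is abelian (indeed central). $[a]$ denotes the conjugacy class of $a$. $\mathrm{H}_i(G;\mathbb{Z})$ is integral group homology. *)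

theory Defs
  imports "HOL-Algebra.Algebra"
begin

text \<open>Words in the generators sigma(a), a in G: a letter (True, a) stands for
  sigma(a), a letter (False, a) for sigma(a)^(-1).\<close>

type_synonym 'a word = "(bool \<times> 'a) list"

definition pq_words :: "('a, 'b) monoid_scheme \<Rightarrow> 'a word set" where
  "pq_words G = {w. \<forall>l \<in> set w. snd l \<in> carrier G}"

definition sigma_pow_word :: "'a \<Rightarrow> int \<Rightarrow> 'a word" where
  "sigma_pow_word a n = replicate (nat \<bar>n\<bar>) (n \<ge> 0, a)"

inductive pq_eq :: "('a, 'b) monoid_scheme \<Rightarrow> 'a word \<Rightarrow> 'a word \<Rightarrow> bool"
  for G where
  refl: "w \<in> pq_words G \<Longrightarrow> pq_eq G w w"
| sym: "pq_eq G u v \<Longrightarrow> pq_eq G v u"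
| trans: "pq_eq G u v \<Longrightarrow> pq_eq G v w \<Longrightarrow> pq_eq G u w"
| cong: "pq_eq G u v \<Longrightarrow> w1 \<in> pq_words G \<Longrightarrow> w2 \<in> pq_words G \<Longrightarrow>
         pq_eq G (w1 @ u @ w2) (w1 @ v @ w2)"
| cancel: "x \<in> carrier G \<Longrightarrow> pq_eq G [(b, x), (\<not> b, x)] []"
| rel_conj: "a \<in> carrier G \<Longrightarrow> b \<in> carrier G \<Longrightarrow>
         pq_eq G [(True, a \<otimes>\<^bsub>G\<^esub> b \<otimes>\<^bsub>G\<^esub> inv\<^bsub>G\<^esub> a)] [(True, a), (True, b), (False, a)]"
| rel_pow: "a \<in> carrier G \<Longrightarrow> pq_eq G [(True, a [^]\<^bsub>G\<^esub> (n::int))] (sigma_pow_word a n)"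
| rel_unit: "pq_eq G [(True, \<one>\<^bsub>G\<^esub>)] []"

definition pq_class :: "('a, 'b) monoid_scheme \<Rightarrow> 'a word \<Rightarrow> 'a word set" where
  "pq_class G w = {z. pq_eq G w z}"

definition GrPq :: "('a, 'b) monoid_scheme \<Rightarrow> 'a word set monoid" where
  "GrPq G = \<lparr> carrier = pq_class G ` pq_words G,
             monoid.mult = (\<lambda>U V. {z. \<exists>x\<in>U. \<exists>y\<in>V. pq_eq G (x @ y) z}),
             monoid.one = pq_class G [] \<rparr>"

definition eval_word :: "('a, 'b) monoid_scheme \<Rightarrow> 'a word \<Rightarrow> 'a" where
  "eval_word G w = foldr (\<lambda>l acc. (if fst l then snd l else inv\<^bsub>G\<^esub> (snd l)) \<otimes>\<^bsub>G\<^esub> acc) w \<one>\<^bsub>G\<^esub>"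

definition pq_eps :: "('a, 'b) monoid_scheme \<Rightarrow> 'a word set \<Rightarrow> 'a" where
  "pq_eps G S = eval_word G (SOME w. w \<in> S)"

definition A_grp :: "('a, 'b) monoid_scheme \<Rightarrow> 'a word set monoid" where
  "A_grp G = (GrPq G)\<lparr> carrier := kernel (GrPq G) G (pq_eps G) \<rparr>"

section \<open>Integral group homology via the (inhomogeneous) bar complex\<close>

text \<open>Chains C_n: finitely supported integer combinations of n-tuples [g1|...|gn].\<close>
definition chain_grp :: "('a, 'b) monoid_scheme \<Rightarrow> nat \<Rightarrow> ('a list \<Rightarrow> int) monoid" where
  "chain_grp G n = \<lparr> carrier = {f. finite {x. f x \<noteq> 0} \<and>
                      (\<forall>x. f x \<noteq> 0 \<longrightarrow> length x = n \<and> set x \<subseteq> carrier G)},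
                    monoid.mult = (\<lambda>f g x. f x + g x),
                    monoid.one = (\<lambda>_. 0) \<rparr>"

definition bar_face :: "('a, 'b) monoid_scheme \<Rightarrow> nat \<Rightarrow> 'a list \<Rightarrow> 'a list" where
  "bar_face G i x = (if i = 0 then tl x
                     else if i = length x then butlast x
                     else take (i - 1) x @ [x ! (i - 1) \<otimes>\<^bsub>G\<^esub> x ! i] @ drop (i + 1) x)"

text \<open>Coefficient of y in d[x] (trivial coefficients Z); d_0 = 0.\<close>
definition bar_coeff :: "('a, 'b) monoid_scheme \<Rightarrow> 'a list \<Rightarrow> 'a list \<Rightarrow> int" where
  "bar_coeff G x y = (if x = [] then 0
     else (\<Sum>i\<in>{0..length x}. (-1) ^ i * (if bar_face G i x = y then 1 else 0)))"

definition bar_d :: "('a, 'b) monoid_scheme \<Rightarrow> ('a list \<Rightarrow> int) \<Rightarrow> ('a list \<Rightarrow> int)" where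
  "bar_d G f = (\<lambda>y. \<Sum>x\<in>{x. f x \<noteq> 0}. f x * bar_coeff G x y)"

definition cycles :: "('a, 'b) monoid_scheme \<Rightarrow> nat \<Rightarrow> ('a list \<Rightarrow> int) set" where
  "cycles G n = {f \<in> carrier (chain_grp G n). bar_d G f = (\<lambda>_. 0)}"

definition boundaries :: "('a, 'b) monoid_scheme \<Rightarrow> nat \<Rightarrow> ('a list \<Rightarrow> int) set" where
  "boundaries G n = bar_d G ` carrier (chain_grp G (Suc n))"

definition group_homology :: "('a, 'b) monoid_scheme \<Rightarrow> nat \<Rightarrow> ('a list \<Rightarrow> int) set monoid" where
  "group_homology G n = ((chain_grp G n)\<lparr> carrier := cycles G n \<rparr>) Mod (boundaries G n)"

definition conj_class :: "('a, 'b) monoid_scheme \<Rightarrow> 'a \<Rightarrow> 'a set" where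
  "conj_class G a = {g \<otimes>\<^bsub>G\<^esub> a \<otimes>\<^bsub>G\<^esub> inv\<^bsub>G\<^esub> g | g. g \<in> carrier G}"

definition conj_classes :: "('a, 'b) monoid_scheme \<Rightarrow> 'a set set" where
  "conj_classes G = conj_class G ` carrier G"

definition free_ab_Cl :: "('a, 'b) monoid_scheme \<Rightarrow> ('a set \<Rightarrow> int) monoid" where
  "free_ab_Cl G = \<lparr> carrier = {f. finite {c. f c \<noteq> 0} \<and> (\<forall>c. f c \<noteq> 0 \<longrightarrow> c \<in> conj_classes G)},
                   monoid.mult = (\<lambda>f g c. f c + g c),
                   monoid.one = (\<lambda>_. 0) \<rparr>"

definition B_rel :: "('a, 'b) monoid_scheme \<Rightarrow> 'a \<Rightarrow> int \<Rightarrow> ('a set \<Rightarrow> int)" where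
  "B_rel G a n = (\<lambda>c. (if c = conj_class G a then n else 0)
                     - (if c = conj_class G (a [^]\<^bsub>G\<^esub> n) then 1 else 0))"

definition B_grp :: "('a, 'b) monoid_scheme \<Rightarrow> ('a set \<Rightarrow> int) set monoid" where
  "B_grp G = free_ab_Cl G Mod
     generate (free_ab_Cl G) {B_rel G a n | a n. a \<in> carrier G}"

end

theory Submission
  imports Defs
begin

definition fsupp :: "'v set \<Rightarrow> ('v \<Rightarrow> int) monoid" where
  "fsupp V = \<lparr> carrier = {f. finite {x. f x \<noteq> 0} \<and> (\<forall>x. f x \<noteq> 0 \<longrightarrow> x \<in> V)},
              monoid.mult = (\<lambda>f g x. f x + g x), monoid.one = (\<lambda>_. 0) \<rparr>"

definition dl :: "int \<Rightarrow> 'v \<Rightarrow> 'v \<Rightarrow> int" where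
  "dl k v = (\<lambda>y. if y = v then k else 0)"

lemma chain_grp_fsupp: "chain_grp G n = fsupp {x. length x = n \<and> set x \<subseteq> carrier G}"
  by (simp add: chain_grp_def fsupp_def)

lemma free_ab_Cl_fsupp: "free_ab_Cl G = fsupp (conj_classes G)"
  by (simp add: free_ab_Cl_def fsupp_def)

lemma fsupp_mult [simp]: "f \<otimes>\<^bsub>fsupp V\<^esub> g = (\<lambda>x. f x + g x)"
  by (simp add: fsupp_def)
lemma fsupp_one [simp]: "\<one>\<^bsub>fsupp V\<^esub> = (\<lambda>_. 0)"
  by (simp add: fsupp_def)
lemma fsupp_carrier: "f \<in> carrier (fsupp V) \<longleftrightarrow> finite {x. f x \<noteq> 0} \<and> (\<forall>x. f x \<noteq> 0 \<longrightarrow> x \<in> V)"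
  by (simp add: fsupp_def)

lemma fsupp_add_closed:
  assumes "finite {x. f x \<noteq> (0::int)}" "finite {x. g x \<noteq> 0}"
  shows "finite {x. f x + g x \<noteq> 0}"
proof -
  have "{x. f x + g x \<noteq> 0} \<subseteq> {x. f x \<noteq> 0} \<union> {x. g x \<noteq> 0}" by auto
  then show ?thesis using assms by (meson finite_Un finite_subset)
qed

lemma fsupp_comm_group: "comm_group (fsupp V)"
proof (rule comm_groupI)
  fix x y assume x: "x \<in> carrier (fsupp V)" and y: "y \<in> carrier (fsupp V)"
  have "\<forall>a. x a + y a \<noteq> 0 \<longrightarrow> a \<in> V"
  proof (intro allI impI)
    fix a assume "x a + y a \<noteq> 0"
    then have "x a \<noteq> 0 \<or> y a \<noteq> 0" by linarith
    then show "a \<in> V" using x y by (auto simp: fsupp_carrier)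
  qed
  then show "x \<otimes>\<^bsub>fsupp V\<^esub> y \<in> carrier (fsupp V)"
    using x y by (simp add: fsupp_carrier fsupp_add_closed)
next
  fix x assume x: "x \<in> carrier (fsupp V)"
  show "\<exists>y\<in>carrier (fsupp V). y \<otimes>\<^bsub>fsupp V\<^esub> x = \<one>\<^bsub>fsupp V\<^esub>"
    by (rule bexI[of _ "\<lambda>a. - x a"]) (use x in \<open>simp_all add: fsupp_carrier\<close>)
next
  show "\<one>\<^bsub>fsupp V\<^esub> \<in> carrier (fsupp V)" by (simp add: fsupp_carrier)
next
  fix x y z :: "'a \<Rightarrow> int"
  show "x \<otimes>\<^bsub>fsupp V\<^esub> y \<otimes>\<^bsub>fsupp V\<^esub> z = x \<otimes>\<^bsub>fsupp V\<^esub> (y \<otimes>\<^bsub>fsupp V\<^esub> z)"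
    by (simp add: add.assoc)
next
  fix x y :: "'a \<Rightarrow> int"
  show "x \<otimes>\<^bsub>fsupp V\<^esub> y = y \<otimes>\<^bsub>fsupp V\<^esub> x" by (simp add: add.commute)
next
  fix x :: "'a \<Rightarrow> int"
  show "\<one>\<^bsub>fsupp V\<^esub> \<otimes>\<^bsub>fsupp V\<^esub> x = x" by simp
qed

interpretation fs: comm_group "fsupp V" by (rule fsupp_comm_group)

lemma fsupp_inv [simp]: "f \<in> carrier (fsupp V) \<Longrightarrow> inv\<^bsub>fsupp V\<^esub> f = (\<lambda>x. - f x)"
  by (rule fs.inv_equality) (auto simp: fsupp_carrier)

lemma fsupp_nat_pow: "f \<in> carrier (fsupp V) \<Longrightarrow> f [^]\<^bsub>fsupp V\<^esub> (n::nat) = (\<lambda>x. int n * f x)"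
proof (induction n)
  case 0 then show ?case by simp
next
  case (Suc n)
  have "f [^]\<^bsub>fsupp V\<^esub> Suc n = f [^]\<^bsub>fsupp V\<^esub> n \<otimes>\<^bsub>fsupp V\<^esub> f" by simp
  also have "\<dots> = (\<lambda>x. int (Suc n) * f x)" using Suc by (simp add: distrib_right add.commute)
  finally show ?case .
qed

lemma fsupp_int_pow: "f \<in> carrier (fsupp V) \<Longrightarrow> f [^]\<^bsub>fsupp V\<^esub> (k::int) = (\<lambda>x. k * f x)"
proof (cases "k < 0")
  case True
  assume f: "f \<in> carrier (fsupp V)"
  have c: "f [^]\<^bsub>fsupp V\<^esub> nat (- k) \<in> carrier (fsupp V)" using f by (rule fs.nat_pow_closed)
  have "f [^]\<^bsub>fsupp V\<^esub> k = inv\<^bsub>fsupp V\<^esub> (f [^]\<^bsub>fsupp V\<^esub> nat (- k))"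
    using True by (simp only: int_pow_def2 if_True)
  also have "\<dots> = (\<lambda>x. - (f [^]\<^bsub>fsupp V\<^esub> nat (- k)) x)" using c by (rule fsupp_inv)
  also have "\<dots> = (\<lambda>x. k * f x)" using True by (simp only: fsupp_nat_pow[OF f]) simp
  finally show ?thesis .
next
  case False
  assume f: "f \<in> carrier (fsupp V)"
  have "f [^]\<^bsub>fsupp V\<^esub> k = f [^]\<^bsub>fsupp V\<^esub> nat k"
    using False by (simp only: int_pow_def2 if_False)
  also have "\<dots> = (\<lambda>x. k * f x)" using False by (simp only: fsupp_nat_pow[OF f]) simp
  finally show ?thesis .
qed

lemma dl_carrier [simp]: "v \<in> V \<Longrightarrow> dl k v \<in> carrier (fsupp V)"
proof -
  assume v: "v \<in> V"
  have "{x. dl k v x \<noteq> 0} \<subseteq> {v}" by (auto simp: dl_def)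
  then show ?thesis using v by (auto simp: fsupp_carrier dl_def intro: finite_subset)
qed

lemma dl_pow: "v \<in> V \<Longrightarrow> dl k v = dl 1 v [^]\<^bsub>fsupp V\<^esub> k"
proof -
  assume v: "v \<in> V"
  have "dl 1 v [^]\<^bsub>fsupp V\<^esub> k = (\<lambda>x. k * dl 1 v x)" by (rule fsupp_int_pow) (use v in simp)
  then show ?thesis by (simp add: dl_def fun_eq_iff)
qed

lemma fsupp_induct [consumes 1, case_names zero step]:
  assumes z: "z \<in> carrier (fsupp V)"
    and zero: "P (\<lambda>_. 0)"
    and step: "\<And>z v k. z \<in> carrier (fsupp V) \<Longrightarrow> v \<in> V \<Longrightarrow> P z \<Longrightarrow> P (z \<otimes>\<^bsub>fsupp V\<^esub> dl k v)"
  shows "P z"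
proof -
  have "\<forall>z. z \<in> carrier (fsupp V) \<longrightarrow> card {x. z x \<noteq> 0} = n \<longrightarrow> P z" for n
  proof (induction n)
    case 0
    show ?case
    proof (intro allI impI)
      fix z assume "z \<in> carrier (fsupp V)" "card {x. z x \<noteq> 0} = 0"
      then have "z = (\<lambda>_. 0)" by (auto simp: fsupp_carrier)
      then show "P z" using zero by simp
    qed
  next
    case (Suc n)
    show ?case
    proof (intro allI impI)
      fix z assume z: "z \<in> carrier (fsupp V)" and c: "card {x. z x \<noteq> 0} = Suc n"
      have "{x. z x \<noteq> 0} \<noteq> {}" using c by (metis card.empty nat.distinct(1))
      then obtain v where v: "z v \<noteq> 0" by auto
      define z' where "z' = z(v := 0)"
      have fin: "finite {x. z x \<noteq> 0}" using z by (simp add: fsupp_carrier)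
      have vV: "v \<in> V" using z v by (simp add: fsupp_carrier)
      have s: "{x. z' x \<noteq> 0} = {x. z x \<noteq> 0} - {v}" by (auto simp: z'_def)
      have z': "z' \<in> carrier (fsupp V)" using z by (auto simp: fsupp_carrier z'_def intro: finite_subset[OF _ fin])
      have "card {x. z' x \<noteq> 0} = n" using c v fin by (simp add: s)
      then have "P z'" using Suc.IH z' by blast
      then have "P (z' \<otimes>\<^bsub>fsupp V\<^esub> dl (z v) v)" using step z' vV by blast
      moreover have "z' \<otimes>\<^bsub>fsupp V\<^esub> dl (z v) v = z" by (auto simp: z'_def dl_def fun_eq_iff)
      ultimately show "P z" by simp
    qed
  qed
  then show ?thesis using z by blast
qed

lemma fsupp_hom_agree:
  assumes h1: "h1 \<in> hom (fsupp V) H" and h2: "h2 \<in> hom (fsupp V) H" and H: "group H"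
    and agree: "\<And>v. v \<in> V \<Longrightarrow> h1 (dl 1 v) = h2 (dl 1 v)"
    and z: "z \<in> carrier (fsupp V)"
  shows "h1 z = h2 z"
  using z
proof (induction rule: fsupp_induct)
  case zero
  interpret g1: group_hom "fsupp V" H h1 using h1 H fs.is_group by (simp add: group_hom_def group_hom_axioms_def)
  interpret g2: group_hom "fsupp V" H h2 using h2 H fs.is_group by (simp add: group_hom_def group_hom_axioms_def)
  show ?case using g1.hom_one g2.hom_one by simp
next
  case (step z v k)
  interpret g1: group_hom "fsupp V" H h1 using h1 H fs.is_group by (simp add: group_hom_def group_hom_axioms_def)
  interpret g2: group_hom "fsupp V" H h2 using h2 H fs.is_group by (simp add: group_hom_def group_hom_axioms_def)
  have "h1 (dl k v) = h2 (dl k v)"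
    using step(2) agree[OF step(2)] by (simp add: dl_pow[of v V k] g1.hom_int_pow g2.hom_int_pow)
  moreover have "h1 (z \<otimes>\<^bsub>fsupp V\<^esub> dl k v) = h1 z \<otimes>\<^bsub>H\<^esub> h1 (dl k v)"
    by (rule g1.hom_mult) (use step in auto)
  moreover have "h2 (z \<otimes>\<^bsub>fsupp V\<^esub> dl k v) = h2 z \<otimes>\<^bsub>H\<^esub> h2 (dl k v)"
    by (rule g2.hom_mult) (use step in auto)
  ultimately show ?case using step by simp
qed

lemma fsupp_hom_subgroup:
  assumes h: "h \<in> hom (fsupp V) H" and H: "group H" and K: "subgroup K H"
    and gen: "\<And>v. v \<in> V \<Longrightarrow> h (dl 1 v) \<in> K"
    and z: "z \<in> carrier (fsupp V)"
  shows "h z \<in> K"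
  using z
proof (induction rule: fsupp_induct)
  case zero
  interpret g1: group_hom "fsupp V" H h using h H fs.is_group by (simp add: group_hom_def group_hom_axioms_def)
  show ?case using g1.hom_one subgroup.one_closed[OF K] by simp
next
  case (step z v k)
  interpret g1: group_hom "fsupp V" H h using h H fs.is_group by (simp add: group_hom_def group_hom_axioms_def)
  have "h (dl k v) \<in> K"
    using step(2) gen[OF step(2)] by (simp add: dl_pow[of v V k] g1.hom_int_pow group.subgroup_int_pow_closed[OF H K])
  moreover have "h (z \<otimes>\<^bsub>fsupp V\<^esub> dl k v) = h z \<otimes>\<^bsub>H\<^esub> h (dl k v)"
    by (rule g1.hom_mult) (use step in auto)
  ultimately show ?case using step by (simp add: subgroup.m_closed[OF K])
qed

definition winv :: "'a word \<Rightarrow> 'a word" where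
  "winv w = rev (map (\<lambda>l. (\<not> fst l, snd l)) w)"

definition sig :: "('a, 'b) monoid_scheme \<Rightarrow> 'a \<Rightarrow> 'a word set" where
  "sig G a = pq_class G [(True, a)]"

lemma pq_words_simps [simp]:
  "[] \<in> pq_words G"
  "(l # w \<in> pq_words G) \<longleftrightarrow> snd l \<in> carrier G \<and> w \<in> pq_words G"
  "(u @ v \<in> pq_words G) \<longleftrightarrow> u \<in> pq_words G \<and> v \<in> pq_words G"
  by (auto simp: pq_words_def)

lemma winv_words [simp]: "(winv w \<in> pq_words G) \<longleftrightarrow> w \<in> pq_words G"
  by (auto simp: pq_words_def winv_def)

context group
begin

lemma sigma_pow_word_words: "a \<in> carrier G \<Longrightarrow> sigma_pow_word a n \<in> pq_words G"
  by (auto simp: pq_words_def sigma_pow_word_def)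

lemma pq_eq_words: "pq_eq G u v \<Longrightarrow> u \<in> pq_words G \<and> v \<in> pq_words G"
proof (induction rule: pq_eq.induct)
  case (rel_pow a n)
  then show ?case by (simp add: sigma_pow_word_words)
qed simp_all

lemma pq_eq_refl: "w \<in> pq_words G \<Longrightarrow> pq_eq G w w" by (rule pq_eq.refl)

lemma pq_eq_cong_l: "pq_eq G u v \<Longrightarrow> w \<in> pq_words G \<Longrightarrow> pq_eq G (u @ w) (v @ w)"
  using pq_eq.cong[of G u v "[]" w] by simp

lemma pq_eq_cong_r: "pq_eq G u v \<Longrightarrow> w \<in> pq_words G \<Longrightarrow> pq_eq G (w @ u) (w @ v)"
  using pq_eq.cong[of G u v w "[]"] by simp

lemma pq_eq_app: "pq_eq G u v \<Longrightarrow> pq_eq G u' v' \<Longrightarrow> pq_eq G (u @ u') (v @ v')"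
proof -
  assume a: "pq_eq G u v" "pq_eq G u' v'"
  have "pq_eq G (u @ u') (v @ u')" using a pq_eq_cong_l pq_eq_words by blast
  moreover have "pq_eq G (v @ u') (v @ v')" using a pq_eq_cong_r pq_eq_words by blast
  ultimately show ?thesis by (rule pq_eq.trans)
qed

lemma pq_class_eq: "u \<in> pq_words G \<Longrightarrow> pq_class G u = pq_class G v \<longleftrightarrow> pq_eq G u v"
proof
  assume u: "u \<in> pq_words G" and e: "pq_class G u = pq_class G v"
  have "u \<in> pq_class G u" using u by (simp add: pq_class_def pq_eq_refl)
  then have "u \<in> pq_class G v" using e by simp
  then have "pq_eq G v u" by (simp add: pq_class_def)
  then show "pq_eq G u v" by (rule pq_eq.sym)
next
  assume "pq_eq G u v"
  then show "pq_class G u = pq_class G v"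
    unfolding pq_class_def using pq_eq.sym pq_eq.trans by blast
qed

lemma pq_class_self: "w \<in> pq_words G \<Longrightarrow> w \<in> pq_class G w"
  by (simp add: pq_class_def pq_eq_refl)

lemma pq_class_mem: "x \<in> pq_class G w \<Longrightarrow> w \<in> pq_words G \<Longrightarrow> pq_class G x = pq_class G w"
proof -
  assume "x \<in> pq_class G w" "w \<in> pq_words G"
  then have "pq_eq G w x" by (simp add: pq_class_def)
  then show ?thesis using pq_class_eq pq_eq.sym pq_eq_words by blast
qed

lemma GrPq_mult_class:
  assumes "u \<in> pq_words G" "v \<in> pq_words G"
  shows "pq_class G u \<otimes>\<^bsub>GrPq G\<^esub> pq_class G v = pq_class G (u @ v)"
proof -
  have "{z. \<exists>x\<in>pq_class G u. \<exists>y\<in>pq_class G v. pq_eq G (x @ y) z} = pq_class G (u @ v)"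
  proof (intro Set.set_eqI iffI)
    fix z assume "z \<in> {z. \<exists>x\<in>pq_class G u. \<exists>y\<in>pq_class G v. pq_eq G (x @ y) z}"
    then obtain x y where xy: "x \<in> pq_class G u" "y \<in> pq_class G v" "pq_eq G (x @ y) z"
      by blast
    then have "pq_eq G u x" "pq_eq G v y" by (simp_all add: pq_class_def)
    then have "pq_eq G (u @ v) (x @ y)" by (rule pq_eq_app)
    then have "pq_eq G (u @ v) z" using xy(3) by (rule pq_eq.trans)
    then show "z \<in> pq_class G (u @ v)" by (simp add: pq_class_def)
  next
    fix z assume "z \<in> pq_class G (u @ v)"
    then have "pq_eq G (u @ v) z" by (simp add: pq_class_def)
    moreover have "u \<in> pq_class G u" "v \<in> pq_class G v" using assms pq_class_self by auto
    ultimately show "z \<in> {z. \<exists>x\<in>pq_class G u. \<exists>y\<in>pq_class G v. pq_eq G (x @ y) z}"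
      by blast
  qed
  then show ?thesis by (simp add: GrPq_def)
qed

lemma GrPq_one: "\<one>\<^bsub>GrPq G\<^esub> = pq_class G []" by (simp add: GrPq_def)
lemma GrPq_carrier: "carrier (GrPq G) = pq_class G ` pq_words G" by (simp add: GrPq_def)

lemma winv_cancel: "w \<in> pq_words G \<Longrightarrow> pq_eq G (w @ winv w) []"
proof (induction w)
  case Nil then show ?case by (simp add: winv_def pq_eq_refl)
next
  case (Cons l w)
  obtain b x where l: "l = (b, x)" by (cases l)
  have x: "x \<in> carrier G" and w: "w \<in> pq_words G" using Cons.prems l by auto
  have "(l # w) @ winv (l # w) = [l] @ (w @ winv w) @ [(\<not> b, x)]"
    by (simp add: winv_def l)
  moreover have "pq_eq G ([l] @ (w @ winv w) @ [(\<not> b, x)]) ([l] @ [] @ [(\<not> b, x)])"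
    by (rule pq_eq.cong) (use Cons w x l in auto)
  moreover have "pq_eq G ([l] @ [] @ [(\<not> b, x)]) []"
    using pq_eq.cancel[OF x, of b] l by simp
  ultimately show ?case by (metis pq_eq.trans)
qed

lemma winv_winv [simp]: "winv (winv w) = w"
  by (simp add: winv_def rev_map comp_def)

lemma GrPq_group: "group (GrPq G)"
proof (rule groupI)
  fix x y assume "x \<in> carrier (GrPq G)" "y \<in> carrier (GrPq G)"
  then show "x \<otimes>\<^bsub>GrPq G\<^esub> y \<in> carrier (GrPq G)"
    by (auto simp: GrPq_carrier GrPq_mult_class)
next
  show "\<one>\<^bsub>GrPq G\<^esub> \<in> carrier (GrPq G)" by (auto simp: GrPq_carrier GrPq_one)
next
  fix x y z assume "x \<in> carrier (GrPq G)" "y \<in> carrier (GrPq G)" "z \<in> carrier (GrPq G)"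
  then show "x \<otimes>\<^bsub>GrPq G\<^esub> y \<otimes>\<^bsub>GrPq G\<^esub> z = x \<otimes>\<^bsub>GrPq G\<^esub> (y \<otimes>\<^bsub>GrPq G\<^esub> z)"
    by (auto simp: GrPq_carrier GrPq_mult_class)
next
  fix x assume "x \<in> carrier (GrPq G)"
  then show "\<one>\<^bsub>GrPq G\<^esub> \<otimes>\<^bsub>GrPq G\<^esub> x = x"
    by (auto simp: GrPq_carrier GrPq_mult_class GrPq_one)
next
  fix x assume "x \<in> carrier (GrPq G)"
  then obtain w where w: "w \<in> pq_words G" "x = pq_class G w" by (auto simp: GrPq_carrier)
  have "pq_class G (winv w) \<otimes>\<^bsub>GrPq G\<^esub> x = pq_class G []"
    using w winv_cancel[of "winv w"] by (simp add: GrPq_mult_class pq_class_eq)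
  then show "\<exists>y\<in>carrier (GrPq G). y \<otimes>\<^bsub>GrPq G\<^esub> x = \<one>\<^bsub>GrPq G\<^esub>"
    using w by (auto simp: GrPq_carrier GrPq_one)
qed

end

locale pqg = group

sublocale pqg \<subseteq> GR: group "GrPq G" by (rule GrPq_group)

context pqg
begin

lemma pq_class_cong: "pq_eq G u v \<Longrightarrow> pq_class G u = pq_class G v"
  using pq_class_eq pq_eq_words by blast

lemma cls_carrier [simp]: "w \<in> pq_words G \<Longrightarrow> pq_class G w \<in> carrier (GrPq G)"
  by (simp add: GrPq_carrier)

lemma sig_carrier [simp]: "a \<in> carrier G \<Longrightarrow> sig G a \<in> carrier (GrPq G)"
  by (simp add: sig_def)

lemma cls_Cons: "snd l \<in> carrier G \<Longrightarrow> w \<in> pq_words G \<Longrightarrow>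
    pq_class G (l # w) = pq_class G [l] \<otimes>\<^bsub>GrPq G\<^esub> pq_class G w"
  using GrPq_mult_class[of "[l]" w] by simp

lemma cls_Nil: "pq_class G [] = \<one>\<^bsub>GrPq G\<^esub>" by (simp add: GrPq_one)

lemma cls_neg: "a \<in> carrier G \<Longrightarrow> pq_class G [(False, a)] = inv\<^bsub>GrPq G\<^esub> sig G a"
proof -
  assume a: "a \<in> carrier G"
  have "sig G a \<otimes>\<^bsub>GrPq G\<^esub> pq_class G [(False, a)] = pq_class G [(True, a), (False, a)]"
    using GrPq_mult_class[of "[(True, a)]" "[(False, a)]"] a by (simp add: sig_def)
  also have "\<dots> = \<one>\<^bsub>GrPq G\<^esub>"
    using pq_eq.cancel[OF a, of True] a by (simp add: pq_class_eq GrPq_one)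
  finally show ?thesis
    by (metis GR.inv_equality GR.inv_inv GR.inv_closed a cls_carrier pq_words_simps(1,2) sig_carrier snd_conv
        GR.inv_unique')
qed

lemma sig_conj: "a \<in> carrier G \<Longrightarrow> b \<in> carrier G \<Longrightarrow>
   sig G (a \<otimes> b \<otimes> inv a) = sig G a \<otimes>\<^bsub>GrPq G\<^esub> sig G b \<otimes>\<^bsub>GrPq G\<^esub> inv\<^bsub>GrPq G\<^esub> sig G a"
proof -
  assume a: "a \<in> carrier G" and b: "b \<in> carrier G"
  have "sig G (a \<otimes> b \<otimes> inv a) = pq_class G [(True, a), (True, b), (False, a)]"
    using pq_class_cong[OF pq_eq.rel_conj[OF a b]] by (simp add: sig_def)
  also have "\<dots> = sig G a \<otimes>\<^bsub>GrPq G\<^esub> (sig G b \<otimes>\<^bsub>GrPq G\<^esub> pq_class G [(False, a)])"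
    using a b GrPq_mult_class[of "[(True, a)]" "[(True, b), (False, a)]"]
      GrPq_mult_class[of "[(True, b)]" "[(False, a)]"] by (simp add: sig_def)
  finally show ?thesis
    by (simp only: cls_neg[OF a] GR.m_assoc[OF sig_carrier[OF a] sig_carrier[OF b] GR.inv_closed[OF sig_carrier[OF a]]])
qed

lemma sig_one: "sig G \<one> = \<one>\<^bsub>GrPq G\<^esub>"
  using pq_eq.rel_unit[of G] by (simp add: sig_def pq_class_eq GrPq_one)

lemma cls_rep_pos: "a \<in> carrier G \<Longrightarrow> pq_class G (replicate m (True, a)) = sig G a [^]\<^bsub>GrPq G\<^esub> m"
proof (induction m)
  case 0 then show ?case by (simp add: GrPq_one)
next
  case (Suc m)
  have "pq_class G (replicate (Suc m) (True, a)) = sig G a \<otimes>\<^bsub>GrPq G\<^esub> sig G a [^]\<^bsub>GrPq G\<^esub> m"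
    using Suc by (simp add: cls_Cons[of "(True, a)"] sig_def[symmetric] pq_words_def)
  also have "\<dots> = sig G a [^]\<^bsub>GrPq G\<^esub> Suc m"
    by (rule GR.nat_pow_Suc2[symmetric]) (simp add: Suc)
  finally show ?case .
qed

lemma cls_rep_neg: "a \<in> carrier G \<Longrightarrow> pq_class G (replicate m (False, a)) = inv\<^bsub>GrPq G\<^esub> (sig G a [^]\<^bsub>GrPq G\<^esub> m)"
proof (induction m)
  case 0 then show ?case by (simp add: cls_Nil)
next
  case (Suc m)
  have "pq_class G (replicate (Suc m) (False, a)) = inv\<^bsub>GrPq G\<^esub> sig G a \<otimes>\<^bsub>GrPq G\<^esub> (inv\<^bsub>GrPq G\<^esub> sig G a) [^]\<^bsub>GrPq G\<^esub> m"
    using Suc by (simp add: cls_Cons[of "(False, a)"] cls_neg GR.nat_pow_inv pq_words_def)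
  also have "\<dots> = (inv\<^bsub>GrPq G\<^esub> sig G a) [^]\<^bsub>GrPq G\<^esub> Suc m"
    by (rule GR.nat_pow_Suc2[symmetric]) (simp add: Suc)
  finally show ?case by (simp only: GR.nat_pow_inv[OF sig_carrier[OF Suc.prems]])
qed

lemma sig_pow: "a \<in> carrier G \<Longrightarrow> sig G (a [^] (n::int)) = sig G a [^]\<^bsub>GrPq G\<^esub> n"
proof -
  assume a: "a \<in> carrier G"
  have "sig G (a [^] n) = pq_class G (sigma_pow_word a n)"
    using pq_class_cong[OF pq_eq.rel_pow[OF a, of n]] by (simp add: sig_def)
  also have "\<dots> = sig G a [^]\<^bsub>GrPq G\<^esub> n"
  proof (cases "n < 0")
    case True
    then have "sigma_pow_word a n = replicate (nat (- n)) (False, a)"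
      by (simp add: sigma_pow_word_def)
    then show ?thesis using True a by (simp only: cls_rep_neg int_pow_def2 if_True)
  next
    case False
    then have "sigma_pow_word a n = replicate (nat n) (True, a)"
      by (simp add: sigma_pow_word_def)
    then show ?thesis using False a by (simp only: cls_rep_pos int_pow_def2 if_False)
  qed
  finally show ?thesis .
qed

lemma sig_inv: "a \<in> carrier G \<Longrightarrow> sig G (inv a) = inv\<^bsub>GrPq G\<^esub> sig G a"
proof -
  assume a: "a \<in> carrier G"
  have "a [^] (-1::int) = inv a" using int_pow_neg[OF a, of 1] int_pow_1[OF a] by simp
  then have "sig G (inv a) = sig G (a [^] (-1::int))" by simp
  also have "\<dots> = sig G a [^]\<^bsub>GrPq G\<^esub> (-1::int)" using a by (rule sig_pow)
  also have "\<dots> = inv\<^bsub>GrPq G\<^esub> sig G a"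
    using GR.int_pow_neg[OF sig_carrier[OF a], of 1] GR.int_pow_1[OF sig_carrier[OF a]] by simp
  finally show ?thesis .
qed

end

definition lv :: "('a, 'b) monoid_scheme \<Rightarrow> bool \<times> 'a \<Rightarrow> 'a" where
  "lv G l = (if fst l then snd l else inv\<^bsub>G\<^esub> (snd l))"

definition tau :: "('a, 'b) monoid_scheme \<Rightarrow> 'a \<Rightarrow> 'a \<Rightarrow> 'a word set" where
  "tau G x y = sig G x \<otimes>\<^bsub>GrPq G\<^esub> sig G y \<otimes>\<^bsub>GrPq G\<^esub> inv\<^bsub>GrPq G\<^esub> sig G (x \<otimes>\<^bsub>G\<^esub> y)"

lemma eval_Nil [simp]: "eval_word G [] = \<one>\<^bsub>G\<^esub>" by (simp add: eval_word_def)
lemma eval_Cons [simp]: "eval_word G (l # w) = lv G l \<otimes>\<^bsub>G\<^esub> eval_word G w"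
  by (simp add: eval_word_def lv_def)

context pqg
begin

lemma lv_carrier [simp]: "snd l \<in> carrier G \<Longrightarrow> lv G l \<in> carrier G"
  by (simp add: lv_def)

lemma eval_carrier [simp]: "w \<in> pq_words G \<Longrightarrow> eval_word G w \<in> carrier G"
  by (induction w) auto

lemma eval_append: "u \<in> pq_words G \<Longrightarrow> v \<in> pq_words G \<Longrightarrow>
    eval_word G (u @ v) = eval_word G u \<otimes> eval_word G v"
  by (induction u) (auto simp: m_assoc)

lemma eval_rep_pos: "a \<in> carrier G \<Longrightarrow> eval_word G (replicate m (True, a)) = a [^] m"
proof (induction m)
  case (Suc m)
  then show ?case by (simp add: lv_def) (metis nat_pow_Suc2 nat_pow_Suc)
qed simp

lemma eval_rep_neg: "a \<in> carrier G \<Longrightarrow> eval_word G (replicate m (False, a)) = inv (a [^] m)"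
proof (induction m)
  case (Suc m)
  then have "eval_word G (replicate (Suc m) (False, a)) = inv a \<otimes> inv (a [^] m)" by (simp add: lv_def)
  also have "\<dots> = inv (a [^] m \<otimes> a)" using Suc by (simp add: inv_mult_group)
  finally show ?case by simp
qed simp

lemma eval_sigma_pow: "a \<in> carrier G \<Longrightarrow> eval_word G (sigma_pow_word a n) = a [^] n"
proof (cases "n < 0")
  case True
  assume a: "a \<in> carrier G"
  have "sigma_pow_word a n = replicate (nat (- n)) (False, a)" using True by (simp add: sigma_pow_word_def)
  then show ?thesis using True a by (simp only: eval_rep_neg int_pow_def2 if_True)
next
  case False
  assume a: "a \<in> carrier G"
  have "sigma_pow_word a n = replicate (nat n) (True, a)" using False by (simp add: sigma_pow_word_def)
  then show ?thesis using False a by (simp only: eval_rep_pos int_pow_def2 if_False)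
qed

lemma eval_pq_eq: "pq_eq G u v \<Longrightarrow> eval_word G u = eval_word G v"
proof (induction rule: pq_eq.induct)
  case (cong u v w1 w2)
  then have "u \<in> pq_words G" "v \<in> pq_words G" using pq_eq_words by auto
  then show ?case using cong by (simp add: eval_append)
next
  case (cancel x b)
  then show ?case by (cases b) (auto simp: lv_def)
next
  case (rel_conj a b)
  then show ?case by (simp add: lv_def m_assoc)
next
  case (rel_pow a n)
  then show ?case by (simp add: eval_sigma_pow lv_def)
qed (auto simp: lv_def)

lemma eps_class: "w \<in> pq_words G \<Longrightarrow> pq_eps G (pq_class G w) = eval_word G w"
proof -
  assume w: "w \<in> pq_words G"
  have "w \<in> pq_class G w" using w by (rule pq_class_self)
  then have "(SOME x. x \<in> pq_class G w) \<in> pq_class G w" by (rule someI)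
  then have "pq_eq G w (SOME x. x \<in> pq_class G w)" by (simp add: pq_class_def)
  then show ?thesis unfolding pq_eps_def by (simp add: eval_pq_eq)
qed

lemma eps_hom: "pq_eps G \<in> hom (GrPq G) G"
proof (rule homI)
  fix x assume "x \<in> carrier (GrPq G)"
  then show "pq_eps G x \<in> carrier G" by (auto simp: GrPq_carrier eps_class)
next
  fix x y assume "x \<in> carrier (GrPq G)" "y \<in> carrier (GrPq G)"
  then show "pq_eps G (x \<otimes>\<^bsub>GrPq G\<^esub> y) = pq_eps G x \<otimes> pq_eps G y"
    by (auto simp: GrPq_carrier eps_class GrPq_mult_class eval_append)
qed

lemma eps_group_hom: "group_hom (GrPq G) G (pq_eps G)"
  by (simp add: group_hom_def group_hom_axioms_def GR.is_group is_group eps_hom)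

lemma eps_sig [simp]: "a \<in> carrier G \<Longrightarrow> pq_eps G (sig G a) = a"
  by (simp add: sig_def eps_class lv_def)

lemma kernel_subgroup: "subgroup (kernel (GrPq G) G (pq_eps G)) (GrPq G)"
  using group_hom.subgroup_kernel[OF eps_group_hom] .

lemma cls_single: "snd l \<in> carrier G \<Longrightarrow> pq_class G [l] = sig G (lv G l)"
proof -
  assume l: "snd l \<in> carrier G"
  obtain b g where bg: "l = (b, g)" by (cases l)
  show ?thesis
  proof (cases b)
    case True then show ?thesis using bg by (simp add: sig_def lv_def)
  next
    case False then show ?thesis using bg l by (simp add: cls_neg sig_inv lv_def)
  qed
qed

lemma cls_Cons_sig: "snd l \<in> carrier G \<Longrightarrow> w \<in> pq_words G \<Longrightarrow>
    pq_class G (l # w) = sig G (lv G l) \<otimes>\<^bsub>GrPq G\<^esub> pq_class G w"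
  by (simp add: cls_Cons[of l w] cls_single)

lemma sig_conj': "h \<in> carrier G \<Longrightarrow> c \<in> carrier G \<Longrightarrow>
  sig G h \<otimes>\<^bsub>GrPq G\<^esub> sig G c = sig G (h \<otimes> c \<otimes> inv h) \<otimes>\<^bsub>GrPq G\<^esub> sig G h"
  by (simp add: sig_conj GR.m_assoc)

lemma conj_word: "w \<in> pq_words G \<Longrightarrow> b \<in> carrier G \<Longrightarrow>
  pq_class G w \<otimes>\<^bsub>GrPq G\<^esub> sig G b = sig G (eval_word G w \<otimes> b \<otimes> inv (eval_word G w)) \<otimes>\<^bsub>GrPq G\<^esub> pq_class G w"
proof (induction w arbitrary: b)
  case Nil then show ?case by (simp add: cls_Nil)
next
  case (Cons l w)
  have l: "snd l \<in> carrier G" and w: "w \<in> pq_words G" using Cons.prems by auto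
  define h where "h = lv G l"
  define e where "e = eval_word G w"
  have h: "h \<in> carrier G" and e: "e \<in> carrier G" using l w by (simp_all add: h_def e_def)
  have c: "e \<otimes> b \<otimes> inv e \<in> carrier G" using e Cons.prems by simp
  have "pq_class G (l # w) \<otimes>\<^bsub>GrPq G\<^esub> sig G b = sig G h \<otimes>\<^bsub>GrPq G\<^esub> (pq_class G w \<otimes>\<^bsub>GrPq G\<^esub> sig G b)"
    using l w Cons.prems by (simp add: cls_Cons_sig h_def GR.m_assoc)
  also have "\<dots> = sig G h \<otimes>\<^bsub>GrPq G\<^esub> sig G (e \<otimes> b \<otimes> inv e) \<otimes>\<^bsub>GrPq G\<^esub> pq_class G w"
    using Cons.IH[OF w Cons.prems(2)] w h c by (simp add: e_def GR.m_assoc)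
  also have "\<dots> = sig G (h \<otimes> (e \<otimes> b \<otimes> inv e) \<otimes> inv h) \<otimes>\<^bsub>GrPq G\<^esub> sig G h \<otimes>\<^bsub>GrPq G\<^esub> pq_class G w"
    by (simp only: sig_conj'[OF h c])
  also have "h \<otimes> (e \<otimes> b \<otimes> inv e) \<otimes> inv h = (h \<otimes> e) \<otimes> b \<otimes> inv (h \<otimes> e)"
    using h e Cons.prems by (simp add: m_assoc inv_mult_group)
  also have "sig G ((h \<otimes> e) \<otimes> b \<otimes> inv (h \<otimes> e)) \<otimes>\<^bsub>GrPq G\<^esub> sig G h \<otimes>\<^bsub>GrPq G\<^esub> pq_class G w
     = sig G (eval_word G (l # w) \<otimes> b \<otimes> inv (eval_word G (l # w))) \<otimes>\<^bsub>GrPq G\<^esub> pq_class G (l # w)"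
    using l w h e Cons.prems by (simp add: cls_Cons_sig h_def e_def GR.m_assoc)
  finally show ?case .
qed

lemma kernel_central_sig:
  assumes u: "u \<in> kernel (GrPq G) G (pq_eps G)" and b: "b \<in> carrier G"
  shows "u \<otimes>\<^bsub>GrPq G\<^esub> sig G b = sig G b \<otimes>\<^bsub>GrPq G\<^esub> u"
proof -
  obtain w where w: "w \<in> pq_words G" "u = pq_class G w" using u by (auto simp: kernel_def GrPq_carrier)
  have "eval_word G w = \<one>" using u w by (simp add: kernel_def eps_class)
  then show ?thesis using conj_word[OF w(1) b] w b by simp
qed

lemma kernel_central:
  assumes u: "u \<in> kernel (GrPq G) G (pq_eps G)" and v: "v \<in> carrier (GrPq G)"
  shows "u \<otimes>\<^bsub>GrPq G\<^esub> v = v \<otimes>\<^bsub>GrPq G\<^esub> u"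
proof -
  have uc: "u \<in> carrier (GrPq G)" using u by (simp add: kernel_def)
  obtain w where w: "w \<in> pq_words G" "v = pq_class G w" using v by (auto simp: GrPq_carrier)
  have "u \<otimes>\<^bsub>GrPq G\<^esub> pq_class G w = pq_class G w \<otimes>\<^bsub>GrPq G\<^esub> u" using w(1)
  proof (induction w)
    case Nil then show ?case using uc by (simp add: cls_Nil)
  next
    case (Cons l w)
    have l: "snd l \<in> carrier G" and w: "w \<in> pq_words G" using Cons.prems by auto
    have s: "sig G (lv G l) \<in> carrier (GrPq G)" using l by simp
    have "u \<otimes>\<^bsub>GrPq G\<^esub> pq_class G (l # w) = u \<otimes>\<^bsub>GrPq G\<^esub> sig G (lv G l) \<otimes>\<^bsub>GrPq G\<^esub> pq_class G w"
      using l w uc by (simp add: cls_Cons_sig GR.m_assoc)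
    also have "\<dots> = sig G (lv G l) \<otimes>\<^bsub>GrPq G\<^esub> u \<otimes>\<^bsub>GrPq G\<^esub> pq_class G w"
      by (simp only: kernel_central_sig[OF u lv_carrier[OF l]])
    also have "\<dots> = sig G (lv G l) \<otimes>\<^bsub>GrPq G\<^esub> (u \<otimes>\<^bsub>GrPq G\<^esub> pq_class G w)"
      using s uc w by (simp add: GR.m_assoc)
    also have "\<dots> = pq_class G (l # w) \<otimes>\<^bsub>GrPq G\<^esub> u"
      using l w uc by (simp add: Cons.IH[OF w] cls_Cons_sig GR.m_assoc)
    finally show ?case .
  qed
  then show ?thesis using w by simp
qed

lemma A_comm_group: "comm_group (A_grp G)"
proof -
  have g: "group (A_grp G)" unfolding A_grp_def
    by (rule subgroup.subgroup_is_group[OF kernel_subgroup GR.is_group])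
  show ?thesis
  proof (rule group.group_comm_groupI[OF g])
    fix x y assume "x \<in> carrier (A_grp G)" "y \<in> carrier (A_grp G)"
    then show "x \<otimes>\<^bsub>A_grp G\<^esub> y = y \<otimes>\<^bsub>A_grp G\<^esub> x"
      using kernel_central by (simp add: A_grp_def kernel_def)
  qed
qed

end

definition cv :: "('a, 'b) monoid_scheme \<Rightarrow> nat \<Rightarrow> 'a list set" where
  "cv G n = {x. length x = n \<and> set x \<subseteq> carrier G}"

lemma chain_grp_cv: "chain_grp G n = fsupp (cv G n)"
  by (simp add: chain_grp_fsupp cv_def)

lemma sum_supp:
  assumes "finite S" "{x. f x \<noteq> (0::int)} \<subseteq> S"
  shows "(\<Sum>x\<in>{x. f x \<noteq> 0}. f x * c x) = (\<Sum>x\<in>S. f x * c x)"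
  by (rule sum.mono_neutral_left) (use assms in \<open>auto intro: finite_subset\<close>)

context pqg
begin

lemma bar_face_valid:
  assumes x: "x \<in> cv G (Suc n)" and i: "i \<le> Suc n"
  shows "bar_face G i x \<in> cv G n"
proof -
  have lx: "length x = Suc n" and sx: "set x \<subseteq> carrier G" using x by (auto simp: cv_def)
  show ?thesis
  proof (cases "i = 0")
    case True
    then show ?thesis using lx sx by (auto simp: bar_face_def cv_def dest: list.set_sel(2)[rotated])
  next
    case False
    show ?thesis
    proof (cases "i = Suc n")
      case True
      then show ?thesis using lx sx False by (auto simp: bar_face_def cv_def dest: in_set_butlastD)
    next
      case ni: False
      have i1: "i - 1 < length x" "i < length x" using i ni lx False by auto
      have c: "x ! (i - 1) \<otimes> x ! i \<in> carrier G" using i1 sx nth_mem by blast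
      have "length (take (i - 1) x @ [x ! (i - 1) \<otimes> x ! i] @ drop (i + 1) x) = n"
        using lx i ni False by auto
      moreover have "set (take (i - 1) x @ [x ! (i - 1) \<otimes> x ! i] @ drop (i + 1) x) \<subseteq> carrier G"
        using sx c set_take_subset[of "i - 1" x] set_drop_subset[of "i + 1" x] by auto
      ultimately show ?thesis using False ni lx by (simp add: bar_face_def cv_def)
    qed
  qed
qed

lemma bar_coeff_nz:
  assumes "bar_coeff G x y \<noteq> 0"
  shows "\<exists>i\<in>{0..length x}. bar_face G i x = y"
proof (rule ccontr)
  assume "\<not> ?thesis"
  then have "bar_coeff G x y = 0" unfolding bar_coeff_def by (auto intro: sum.neutral)
  then show False using assms by simp
qed

lemma bar_d_nz:
  assumes "bar_d G f y \<noteq> 0"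
  shows "\<exists>x. f x \<noteq> 0 \<and> bar_coeff G x y \<noteq> 0"
proof (rule ccontr)
  assume "\<not> ?thesis"
  then have "bar_d G f y = 0" unfolding bar_d_def by (intro sum.neutral) auto
  then show False using assms by simp
qed

lemma bar_d_carrier:
  assumes f: "f \<in> carrier (fsupp (cv G (Suc n)))"
  shows "bar_d G f \<in> carrier (fsupp (cv G n))"
proof -
  have fin: "finite {x. f x \<noteq> 0}" and fv: "\<And>x. f x \<noteq> 0 \<Longrightarrow> x \<in> cv G (Suc n)"
    using f by (auto simp: fsupp_carrier)
  have sub: "{y. bar_d G f y \<noteq> 0} \<subseteq> (\<Union>x\<in>{x. f x \<noteq> 0}. (\<lambda>i. bar_face G i x) ` {0..length x})"
  proof
    fix y assume "y \<in> {y. bar_d G f y \<noteq> 0}"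
    then obtain x where "f x \<noteq> 0" "bar_coeff G x y \<noteq> 0" using bar_d_nz by blast
    then show "y \<in> (\<Union>x\<in>{x. f x \<noteq> 0}. (\<lambda>i. bar_face G i x) ` {0..length x})"
      using bar_coeff_nz by fastforce
  qed
  have "finite {y. bar_d G f y \<noteq> 0}" by (rule finite_subset[OF sub]) (use fin in auto)
  moreover have "bar_d G f y \<noteq> 0 \<longrightarrow> y \<in> cv G n" for y
  proof
    assume "bar_d G f y \<noteq> 0"
    then obtain x where x: "f x \<noteq> 0" "bar_coeff G x y \<noteq> 0" using bar_d_nz by blast
    then obtain i where i: "i \<in> {0..length x}" "bar_face G i x = y" using bar_coeff_nz by blast
    have "x \<in> cv G (Suc n)" using fv x by blast
    moreover then have "i \<le> Suc n" using i by (simp add: cv_def)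
    ultimately show "y \<in> cv G n" using bar_face_valid i by blast
  qed
  ultimately show ?thesis by (simp add: fsupp_carrier)
qed

lemma bar_d_add:
  assumes f: "f \<in> carrier (fsupp V)" and g: "g \<in> carrier (fsupp V)"
  shows "bar_d G (\<lambda>x. f x + g x) = (\<lambda>y. bar_d G f y + bar_d G g y)"
proof
  fix y
  let ?S = "{x. f x \<noteq> 0} \<union> {x. g x \<noteq> 0}"
  have fS: "finite ?S" using f g by (simp add: fsupp_carrier)
  have "bar_d G (\<lambda>x. f x + g x) y = (\<Sum>x\<in>?S. (f x + g x) * bar_coeff G x y)"
    unfolding bar_d_def by (rule sum_supp[OF fS]) auto
  also have "\<dots> = (\<Sum>x\<in>?S. f x * bar_coeff G x y) + (\<Sum>x\<in>?S. g x * bar_coeff G x y)"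
    by (simp add: distrib_right sum.distrib)
  also have "(\<Sum>x\<in>?S. f x * bar_coeff G x y) = bar_d G f y"
    unfolding bar_d_def by (rule sum_supp[OF fS, symmetric]) auto
  also have "(\<Sum>x\<in>?S. g x * bar_coeff G x y) = bar_d G g y"
    unfolding bar_d_def by (rule sum_supp[OF fS, symmetric]) auto
  finally show "bar_d G (\<lambda>x. f x + g x) y = bar_d G f y + bar_d G g y" .
qed

lemma bar_d_hom: "bar_d G \<in> hom (fsupp (cv G (Suc n))) (fsupp (cv G n))"
proof (rule homI)
  fix f assume "f \<in> carrier (fsupp (cv G (Suc n)))"
  then show "bar_d G f \<in> carrier (fsupp (cv G n))" by (rule bar_d_carrier)
next
  fix f g assume "f \<in> carrier (fsupp (cv G (Suc n)))" "g \<in> carrier (fsupp (cv G (Suc n)))"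
  then show "bar_d G (f \<otimes>\<^bsub>fsupp (cv G (Suc n))\<^esub> g) = bar_d G f \<otimes>\<^bsub>fsupp (cv G n)\<^esub> bar_d G g"
    by (simp add: bar_d_add)
qed

lemma bar_d_dl: "bar_d G (dl k p) = (\<lambda>y. k * bar_coeff G p y)"
proof (cases "k = 0")
  case True
  then show ?thesis by (simp add: bar_d_def dl_def)
next
  case False
  then have "{x. dl k p x \<noteq> 0} = {p}" by (auto simp: dl_def)
  then show ?thesis by (simp add: bar_d_def dl_def)
qed

lemma bar_coeff_1: "bar_coeff G [x] y = 0"
  by (simp add: bar_coeff_def bar_face_def)

lemma bar_coeff_2: "bar_coeff G [x, z] y =
   (if y = [z] then 1 else 0) - (if y = [x \<otimes> z] then 1 else 0) + (if y = [x] then 1 else 0)"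
proof -
  have s: "{0..length [x, z]} = {0, 1, 2::nat}" by auto
  show ?thesis unfolding bar_coeff_def s by (auto simp: bar_face_def)
qed

lemma bar_coeff_3: "bar_coeff G [x, z, t] y =
   (if y = [z, t] then 1 else 0) - (if y = [x \<otimes> z, t] then 1 else 0)
   + (if y = [x, z \<otimes> t] then 1 else 0) - (if y = [x, z] then 1 else 0)"
proof -
  have s: "{0..length [x, z, t]} = {0, 1, 2, 3::nat}" by auto
  show ?thesis unfolding bar_coeff_def s by (auto simp: bar_face_def)
qed

lemma cycles_1: "cycles G 1 = carrier (chain_grp G 1)"
proof -
  have "bar_d G f = (\<lambda>_. 0)" if "f \<in> carrier (chain_grp G 1)" for f
  proof
    fix y
    have "\<And>x. f x \<noteq> 0 \<Longrightarrow> bar_coeff G x y = 0"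
      using that by (auto simp: chain_grp_def length_Suc_conv bar_coeff_1)
    then show "bar_d G f y = 0" unfolding bar_d_def by (auto intro: sum.neutral)
  qed
  then show ?thesis by (auto simp: cycles_def)
qed

end

definition linx :: "('c, 'd) monoid_scheme \<Rightarrow> ('v \<Rightarrow> 'c) \<Rightarrow> ('v \<Rightarrow> int) \<Rightarrow> 'c" where
  "linx H \<phi> z = finprod H (\<lambda>v. \<phi> v [^]\<^bsub>H\<^esub> z v) {v. z v \<noteq> 0}"

lemma (in group) inv_cancel_l [simp]: "x \<in> carrier G \<Longrightarrow> y \<in> carrier G \<Longrightarrow> inv x \<otimes> (x \<otimes> y) = y"
  by (simp add: m_assoc[symmetric])
lemma (in group) inv_cancel_r [simp]: "x \<in> carrier G \<Longrightarrow> y \<in> carrier G \<Longrightarrow> x \<otimes> (inv x \<otimes> y) = y"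
  by (simp add: m_assoc[symmetric])

lemma (in comm_group) linx_sup:
  assumes phi: "\<phi> \<in> V \<rightarrow> carrier G" and z: "z \<in> carrier (fsupp V)"
    and S: "finite S" "{v. z v \<noteq> 0} \<subseteq> S" "S \<subseteq> V"
  shows "linx G \<phi> z = finprod G (\<lambda>v. \<phi> v [^] z v) S"
  unfolding linx_def
proof (rule finprod_mono_neutral_cong_left[OF S(1,2)])
  show "\<And>i. i \<in> S - {v. z v \<noteq> 0} \<Longrightarrow> \<phi> i [^] z i = \<one>" by auto
  show "(\<lambda>v. \<phi> v [^] z v) \<in> S \<rightarrow> carrier G" using phi S(3) by auto
qed simp

lemma (in comm_group) linx_hom:
  assumes phi: "\<phi> \<in> V \<rightarrow> carrier G"
  shows "linx G \<phi> \<in> hom (fsupp V) G"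
proof (rule homI)
  fix z assume z: "z \<in> carrier (fsupp V)"
  then have "\<And>v. z v \<noteq> 0 \<Longrightarrow> \<phi> v \<in> carrier G" using phi by (auto simp: fsupp_carrier)
  then show "linx G \<phi> z \<in> carrier G" unfolding linx_def by (intro finprod_closed) auto
next
  fix f g assume f: "f \<in> carrier (fsupp V)" and g: "g \<in> carrier (fsupp V)"
  let ?S = "{v. f v \<noteq> 0} \<union> {v. g v \<noteq> 0}"
  have fS: "finite ?S" and SV: "?S \<subseteq> V" using f g by (auto simp: fsupp_carrier)
  have fg: "f \<otimes>\<^bsub>fsupp V\<^esub> g \<in> carrier (fsupp V)" using f g by (rule fs.m_closed)
  have pc: "\<And>h. (\<lambda>v. \<phi> v [^] (h v::int)) \<in> ?S \<rightarrow> carrier G" using phi SV by auto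
  have sub: "{v. (f \<otimes>\<^bsub>fsupp V\<^esub> g) v \<noteq> 0} \<subseteq> ?S" by auto
  have "linx G \<phi> (f \<otimes>\<^bsub>fsupp V\<^esub> g) = finprod G (\<lambda>v. \<phi> v [^] (f v + g v)) ?S"
    using linx_sup[OF phi fg fS sub SV] by simp
  also have "\<dots> = finprod G (\<lambda>v. \<phi> v [^] f v \<otimes> \<phi> v [^] g v) ?S"
  proof (intro finprod_cong')
    have pv: "\<And>v. v \<in> ?S \<Longrightarrow> \<phi> v \<in> carrier G" using phi SV by auto
    show "(\<lambda>v. \<phi> v [^] f v \<otimes> \<phi> v [^] g v) \<in> ?S \<rightarrow> carrier G" using pv by auto
    show "\<And>i. i \<in> ?S \<Longrightarrow> \<phi> i [^] (f i + g i) = \<phi> i [^] f i \<otimes> \<phi> i [^] g i"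
      using pv by (simp add: int_pow_mult)
  qed simp
  also have "\<dots> = finprod G (\<lambda>v. \<phi> v [^] f v) ?S \<otimes> finprod G (\<lambda>v. \<phi> v [^] g v) ?S"
    using pc by simp
  also have "\<dots> = linx G \<phi> f \<otimes> linx G \<phi> g"
    using linx_sup[OF phi f fS _ SV] linx_sup[OF phi g fS _ SV] by auto
  finally show "linx G \<phi> (f \<otimes>\<^bsub>fsupp V\<^esub> g) = linx G \<phi> f \<otimes> linx G \<phi> g" .
qed

lemma (in comm_group) linx_dl:
  assumes "\<phi> v \<in> carrier G"
  shows "linx G \<phi> (dl k v) = \<phi> v [^] k"
proof (cases "k = 0")
  case True then show ?thesis by (simp add: linx_def dl_def)
next
  case False
  then have "{x. dl k v x \<noteq> 0} = {v}" by (auto simp: dl_def)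
  then show ?thesis using assms by (simp add: linx_def dl_def)
qed

definition TT :: "('a, 'b) monoid_scheme \<Rightarrow> ('a list \<Rightarrow> int) \<Rightarrow> 'a word set" where
  "TT G = linx (A_grp G) (\<lambda>p. tau G (p ! 0) (p ! 1))"

context pqg
begin

abbreviation "KK \<equiv> kernel (GrPq G) G (pq_eps G)"

lemma A_carrier: "carrier (A_grp G) = KK" by (simp add: A_grp_def)
lemma A_mult: "x \<otimes>\<^bsub>A_grp G\<^esub> y = x \<otimes>\<^bsub>GrPq G\<^esub> y" by (simp add: A_grp_def)
lemma A_one: "\<one>\<^bsub>A_grp G\<^esub> = \<one>\<^bsub>GrPq G\<^esub>" by (simp add: A_grp_def)
lemma A_inv: "x \<in> KK \<Longrightarrow> inv\<^bsub>A_grp G\<^esub> x = inv\<^bsub>GrPq G\<^esub> x"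
  unfolding A_grp_def by (rule GR.m_inv_consistent[OF kernel_subgroup])

lemma KK_carrier: "x \<in> KK \<Longrightarrow> x \<in> carrier (GrPq G)" by (simp add: kernel_def)

lemma tau_carrier: "x \<in> carrier G \<Longrightarrow> y \<in> carrier G \<Longrightarrow> tau G x y \<in> carrier (GrPq G)"
  by (simp add: tau_def)

lemma tau_K: "x \<in> carrier G \<Longrightarrow> y \<in> carrier G \<Longrightarrow> tau G x y \<in> KK"
proof -
  assume x: "x \<in> carrier G" and y: "y \<in> carrier G"
  interpret e: group_hom "GrPq G" G "pq_eps G" by (rule eps_group_hom)
  have "pq_eps G (tau G x y) = x \<otimes> y \<otimes> inv (x \<otimes> y)" using x y by (simp add: tau_def)
  also have "\<dots> = \<one>" using x y by simp
  finally show ?thesis using x y by (simp add: kernel_def tau_carrier)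
qed

lemma tau_1_1: "tau G \<one> \<one> = \<one>\<^bsub>GrPq G\<^esub>"
  by (simp add: tau_def sig_one)

lemma tau_inv: "g \<in> carrier G \<Longrightarrow> tau G g (inv g) = \<one>\<^bsub>GrPq G\<^esub>"
  by (simp add: tau_def sig_one sig_inv)

lemma tau_pow: "a \<in> carrier G \<Longrightarrow> tau G (a [^] (n::int)) a = \<one>\<^bsub>GrPq G\<^esub>"
proof -
  assume a: "a \<in> carrier G"
  have e: "a [^] n \<otimes> a = a [^] (n + 1)" using a by (simp add: int_pow_mult)
  have "sig G (a [^] (n + 1)) = sig G a [^]\<^bsub>GrPq G\<^esub> n \<otimes>\<^bsub>GrPq G\<^esub> sig G a"
    using a by (simp add: sig_pow GR.int_pow_mult)
  then show ?thesis using a by (simp add: tau_def e sig_pow)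
qed

lemma tau_conj: "g \<in> carrier G \<Longrightarrow> a \<in> carrier G \<Longrightarrow>
   tau G g a \<otimes>\<^bsub>GrPq G\<^esub> tau G (g \<otimes> a) (inv g) = \<one>\<^bsub>GrPq G\<^esub>"
proof -
  assume g: "g \<in> carrier G" and a: "a \<in> carrier G"
  let ?s = "sig G"
  have c: "?s g \<in> carrier (GrPq G)" "?s a \<in> carrier (GrPq G)" "?s (g \<otimes> a) \<in> carrier (GrPq G)"
    using g a by auto
  have "tau G g a \<otimes>\<^bsub>GrPq G\<^esub> tau G (g \<otimes> a) (inv g)
     = ?s g \<otimes>\<^bsub>GrPq G\<^esub> ?s a \<otimes>\<^bsub>GrPq G\<^esub> inv\<^bsub>GrPq G\<^esub> ?s (g \<otimes> a) \<otimes>\<^bsub>GrPq G\<^esub>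
       (?s (g \<otimes> a) \<otimes>\<^bsub>GrPq G\<^esub> inv\<^bsub>GrPq G\<^esub> ?s g \<otimes>\<^bsub>GrPq G\<^esub> inv\<^bsub>GrPq G\<^esub> (?s g \<otimes>\<^bsub>GrPq G\<^esub> ?s a \<otimes>\<^bsub>GrPq G\<^esub> inv\<^bsub>GrPq G\<^esub> ?s g))"
    using g a by (simp add: tau_def sig_inv sig_conj)
  also have "\<dots> = \<one>\<^bsub>GrPq G\<^esub>"
    using c by (simp add: GR.m_assoc GR.inv_mult_group)
  finally show ?thesis .
qed

lemma tau_cocycle: "x \<in> carrier G \<Longrightarrow> y \<in> carrier G \<Longrightarrow> z \<in> carrier G \<Longrightarrow>
   tau G x y \<otimes>\<^bsub>GrPq G\<^esub> tau G (x \<otimes> y) z = tau G y z \<otimes>\<^bsub>GrPq G\<^esub> tau G x (y \<otimes> z)"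
proof -
  assume x: "x \<in> carrier G" and y: "y \<in> carrier G" and z: "z \<in> carrier G"
  let ?s = "sig G"
  have c: "?s x \<in> carrier (GrPq G)" "?s y \<in> carrier (GrPq G)" "?s z \<in> carrier (GrPq G)"
     "?s (x \<otimes> y) \<in> carrier (GrPq G)" "?s (y \<otimes> z) \<in> carrier (GrPq G)" "?s (x \<otimes> y \<otimes> z) \<in> carrier (GrPq G)"
    using x y z by auto
  have "?s x \<otimes>\<^bsub>GrPq G\<^esub> tau G y z \<otimes>\<^bsub>GrPq G\<^esub> inv\<^bsub>GrPq G\<^esub> ?s x
        = tau G y z \<otimes>\<^bsub>GrPq G\<^esub> ?s x \<otimes>\<^bsub>GrPq G\<^esub> inv\<^bsub>GrPq G\<^esub> ?s x"
    by (simp only: kernel_central[OF tau_K[OF y z] c(1)])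
  also have "\<dots> = tau G y z" using c tau_carrier[OF y z] by (simp add: GR.m_assoc)
  finally have cen: "tau G y z = ?s x \<otimes>\<^bsub>GrPq G\<^esub> tau G y z \<otimes>\<^bsub>GrPq G\<^esub> inv\<^bsub>GrPq G\<^esub> ?s x" by simp
  have "tau G x y \<otimes>\<^bsub>GrPq G\<^esub> tau G (x \<otimes> y) z = ?s x \<otimes>\<^bsub>GrPq G\<^esub> ?s y \<otimes>\<^bsub>GrPq G\<^esub> ?s z \<otimes>\<^bsub>GrPq G\<^esub> inv\<^bsub>GrPq G\<^esub> ?s (x \<otimes> y \<otimes> z)"
    using c by (simp add: tau_def GR.m_assoc)
  also have "\<dots> = (?s x \<otimes>\<^bsub>GrPq G\<^esub> tau G y z \<otimes>\<^bsub>GrPq G\<^esub> inv\<^bsub>GrPq G\<^esub> ?s x) \<otimes>\<^bsub>GrPq G\<^esub> tau G x (y \<otimes> z)"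
    using c x y z by (simp add: tau_def GR.m_assoc m_assoc)
  also have "\<dots> = tau G y z \<otimes>\<^bsub>GrPq G\<^esub> tau G x (y \<otimes> z)" using cen by simp
  finally show ?thesis .
qed

end

lemma (in comm_group) four_cancel:
  assumes c: "a \<in> carrier G" "b \<in> carrier G" "c \<in> carrier G" "d \<in> carrier G"
    and e: "a \<otimes> b = c \<otimes> d"
  shows "c \<otimes> inv b \<otimes> d \<otimes> inv a = \<one>"
proof -
  have "c \<otimes> inv b \<otimes> d \<otimes> inv a = (c \<otimes> d) \<otimes> inv (a \<otimes> b)"
    using c by (simp add: inv_mult_group m_ac)
  then show ?thesis using c by (simp add: e[symmetric])
qed

lemma (in comm_group) hom_diff:
  assumes "h1 \<in> hom K G" "h2 \<in> hom K G" "group K"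
  shows "(\<lambda>x. h1 x \<otimes> inv (h2 x)) \<in> hom K G"
proof (rule homI)
  interpret g1: group_hom K G h1 using assms by (simp add: group_hom_def group_hom_axioms_def is_group)
  interpret g2: group_hom K G h2 using assms by (simp add: group_hom_def group_hom_axioms_def is_group)
  fix x assume "x \<in> carrier K" then show "h1 x \<otimes> inv h2 x \<in> carrier G" by simp
next
  interpret g1: group_hom K G h1 using assms by (simp add: group_hom_def group_hom_axioms_def is_group)
  interpret g2: group_hom K G h2 using assms by (simp add: group_hom_def group_hom_axioms_def is_group)
  fix x y assume xy: "x \<in> carrier K" "y \<in> carrier K"
  then show "h1 (x \<otimes>\<^bsub>K\<^esub> y) \<otimes> inv h2 (x \<otimes>\<^bsub>K\<^esub> y) = h1 x \<otimes> inv h2 x \<otimes> (h1 y \<otimes> inv h2 y)"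
    by (simp add: inv_mult_group m_ac)
qed

context pqg
begin

lemma A_group: "group (A_grp G)" using A_comm_group comm_group.axioms(2) by blast

lemma cv2: "p \<in> cv G 2 \<longleftrightarrow> (\<exists>x y. p = [x, y] \<and> x \<in> carrier G \<and> y \<in> carrier G)"
  by (auto simp: cv_def numeral_2_eq_2 length_Suc_conv)
lemma cv3: "p \<in> cv G 3 \<longleftrightarrow> (\<exists>x y z. p = [x, y, z] \<and> x \<in> carrier G \<and> y \<in> carrier G \<and> z \<in> carrier G)"
  by (auto simp: cv_def numeral_3_eq_3 length_Suc_conv)
lemma cv1: "p \<in> cv G (Suc 0) \<longleftrightarrow> (\<exists>x. p = [x] \<and> x \<in> carrier G)"
  by (auto simp: cv_def length_Suc_conv)

lemma T_phi: "(\<lambda>p. tau G (p ! 0) (p ! 1)) \<in> cv G 2 \<rightarrow> carrier (A_grp G)"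
  by (auto simp: cv2 A_carrier tau_K)

lemma T_hom: "TT G \<in> hom (fsupp (cv G 2)) (A_grp G)"
  unfolding TT_def by (rule comm_group.linx_hom[OF A_comm_group T_phi])

lemma T_ghom: "group_hom (fsupp (cv G 2)) (A_grp G) (TT G)"
  by (simp add: group_hom_def group_hom_axioms_def A_group T_hom fs.is_group)

lemma d_ghom: "group_hom (fsupp (cv G (Suc n))) (fsupp (cv G n)) (bar_d G)"
  by (simp add: group_hom_def group_hom_axioms_def bar_d_hom fs.is_group)

lemma T_dl: "x \<in> carrier G \<Longrightarrow> y \<in> carrier G \<Longrightarrow> TT G (dl k [x, y]) = tau G x y [^]\<^bsub>A_grp G\<^esub> k"
  unfolding TT_def using comm_group.linx_dl[OF A_comm_group, of "\<lambda>p. tau G (p ! 0) (p ! 1)" "[x, y]" k]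
  by (simp add: A_carrier tau_K)

lemma T_dl1: "x \<in> carrier G \<Longrightarrow> y \<in> carrier G \<Longrightarrow> TT G (dl 1 [x, y]) = tau G x y"
  using T_dl[of x y 1] group.int_pow_1[OF A_group, of "tau G x y"] by (simp add: A_carrier tau_K)

lemma dl_cv2 [simp]: "x \<in> carrier G \<Longrightarrow> y \<in> carrier G \<Longrightarrow> dl k [x, y] \<in> carrier (fsupp (cv G 2))"
  by (rule dl_carrier) (simp add: cv2)
lemma dl_cv1 [simp]: "x \<in> carrier G \<Longrightarrow> dl k [x] \<in> carrier (fsupp (cv G (Suc 0)))"
  by (rule dl_carrier) (simp add: cv_def)

lemma d_dl3: "x \<in> carrier G \<Longrightarrow> y \<in> carrier G \<Longrightarrow> z \<in> carrier G \<Longrightarrow>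
  bar_d G (dl 1 [x, y, z]) = dl 1 [y, z] \<otimes>\<^bsub>fsupp (cv G 2)\<^esub> inv\<^bsub>fsupp (cv G 2)\<^esub> dl 1 [x \<otimes> y, z]
     \<otimes>\<^bsub>fsupp (cv G 2)\<^esub> dl 1 [x, y \<otimes> z] \<otimes>\<^bsub>fsupp (cv G 2)\<^esub> inv\<^bsub>fsupp (cv G 2)\<^esub> dl 1 [x, y]"
  by (simp add: bar_d_dl bar_coeff_3 fsupp_inv) (simp add: fun_eq_iff dl_def)

lemma d_dl2: "bar_d G (dl 1 [x, y]) = (\<lambda>p. (if p = [y] then 1 else 0) - (if p = [x \<otimes> y] then 1 else 0) + (if p = [x] then 1 else 0))"
  by (simp add: bar_d_dl bar_coeff_2 fun_eq_iff)

lemma TdZ: "z \<in> carrier (fsupp (cv G 3)) \<Longrightarrow> TT G (bar_d G z) = \<one>\<^bsub>A_grp G\<^esub>"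
proof -
  assume z: "z \<in> carrier (fsupp (cv G 3))"
  interpret T: group_hom "fsupp (cv G 2)" "A_grp G" "TT G" by (rule T_ghom)
  interpret A: comm_group "A_grp G" by (rule A_comm_group)
  have h1: "TT G \<circ> bar_d G \<in> hom (fsupp (cv G 3)) (A_grp G)"
    using Group.hom_compose[OF bar_d_hom[of 2] T_hom] by (simp add: comp_def)
  have h2: "(\<lambda>_. \<one>\<^bsub>A_grp G\<^esub>) \<in> hom (fsupp (cv G 3)) (A_grp G)" by (rule homI) auto
  have "(TT G \<circ> bar_d G) z = (\<lambda>_. \<one>\<^bsub>A_grp G\<^esub>) z"
  proof (rule fsupp_hom_agree[OF h1 h2 A_group _ z])
    fix v assume "v \<in> cv G 3"
    then obtain x y w where v: "v = [x, y, w]" "x \<in> carrier G" "y \<in> carrier G" "w \<in> carrier G"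
      by (auto simp: cv3)
    have t: "tau G x y \<in> carrier (A_grp G)" "tau G (x \<otimes> y) w \<in> carrier (A_grp G)"
       "tau G y w \<in> carrier (A_grp G)" "tau G x (y \<otimes> w) \<in> carrier (A_grp G)"
      using v by (simp_all add: A_carrier tau_K)
    have "(TT G \<circ> bar_d G) (dl 1 v) = tau G y w \<otimes>\<^bsub>A_grp G\<^esub> inv\<^bsub>A_grp G\<^esub> tau G (x \<otimes> y) w
        \<otimes>\<^bsub>A_grp G\<^esub> tau G x (y \<otimes> w) \<otimes>\<^bsub>A_grp G\<^esub> inv\<^bsub>A_grp G\<^esub> tau G x y"
      using v by (simp only: comp_def d_dl3) (simp del: fsupp_mult fsupp_inv add: T_dl1)
    also have "\<dots> = \<one>\<^bsub>A_grp G\<^esub>"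
      by (rule A.four_cancel[OF t]) (use v tau_cocycle in \<open>simp add: A_mult\<close>)
    finally show "(TT G \<circ> bar_d G) (dl 1 v) = (\<lambda>_. \<one>\<^bsub>A_grp G\<^esub>) (dl 1 v)" by simp
  qed
  then show ?thesis by simp
qed

end

definition cl :: "('a, 'b) monoid_scheme \<Rightarrow> ('a list \<Rightarrow> int) \<Rightarrow> ('a set \<Rightarrow> int)" where
  "cl G x = (\<lambda>C. \<Sum>p\<in>{p. x p \<noteq> 0}. x p * (if conj_class G (hd p) = C then 1 else 0))"

definition crep :: "'a set \<Rightarrow> 'a" where "crep C = (SOME a. a \<in> C)"

definition rho :: "('a, 'b) monoid_scheme \<Rightarrow> ('a set \<Rightarrow> int) \<Rightarrow> ('a list \<Rightarrow> int)" where
  "rho G F = (\<lambda>p. if (\<exists>a. p = [a] \<and> a \<in> carrier G \<and> crep (conj_class G a) = a)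
                  then F (conj_class G (hd p)) else 0)"

context pqg
begin

lemma conj_class_self: "a \<in> carrier G \<Longrightarrow> a \<in> conj_class G a"
  unfolding conj_class_def by (rule CollectI, rule exI[of _ \<one>]) simp

lemma conj_class_sub: "a \<in> carrier G \<Longrightarrow> conj_class G a \<subseteq> carrier G"
  by (auto simp: conj_class_def)

lemma conj_class_eq:
  assumes a: "a \<in> carrier G" and b: "b \<in> conj_class G a"
  shows "conj_class G b = conj_class G a"
proof -
  obtain g where g: "g \<in> carrier G" "b = g \<otimes> a \<otimes> inv g" using b by (auto simp: conj_class_def)
  have bc: "b \<in> carrier G" using g a by simp
  show ?thesis
  proof (intro Set.set_eqI iffI)
    fix x assume "x \<in> conj_class G b"
    then obtain h where h: "h \<in> carrier G" "x = h \<otimes> b \<otimes> inv h" by (auto simp: conj_class_def)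
    have "x = (h \<otimes> g) \<otimes> a \<otimes> inv (h \<otimes> g)" using g h a by (simp add: m_assoc inv_mult_group)
    then show "x \<in> conj_class G a" using g h unfolding conj_class_def by blast
  next
    fix x assume "x \<in> conj_class G a"
    then obtain h where h: "h \<in> carrier G" "x = h \<otimes> a \<otimes> inv h" by (auto simp: conj_class_def)
    have "x = (h \<otimes> inv g) \<otimes> b \<otimes> inv (h \<otimes> inv g)" using g h a by (simp add: m_assoc inv_mult_group)
    then show "x \<in> conj_class G b" using g h unfolding conj_class_def by blast
  qed
qed

lemma crep_mem: "a \<in> carrier G \<Longrightarrow> crep (conj_class G a) \<in> conj_class G a"
  unfolding crep_def by (rule someI, rule conj_class_self)

lemma crep_carrier [simp]: "a \<in> carrier G \<Longrightarrow> crep (conj_class G a) \<in> carrier G"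
  using crep_mem conj_class_sub by blast

lemma crep_class [simp]: "a \<in> carrier G \<Longrightarrow> conj_class G (crep (conj_class G a)) = conj_class G a"
  using conj_class_eq crep_mem by blast

lemma crep_conj: "a \<in> carrier G \<Longrightarrow> \<exists>g\<in>carrier G. crep (conj_class G a) = g \<otimes> a \<otimes> inv g"
  using crep_mem by (auto simp: conj_class_def)

lemma cl_sup:
  assumes "finite S" "{p. x p \<noteq> 0} \<subseteq> S"
  shows "cl G x C = (\<Sum>p\<in>S. x p * (if conj_class G (hd p) = C then 1 else 0))"
  unfolding cl_def by (rule sum_supp[OF assms])

lemma cl_nz: "cl G x C \<noteq> 0 \<Longrightarrow> \<exists>p. x p \<noteq> 0 \<and> conj_class G (hd p) = C"
proof (rule ccontr)
  assume "\<not> (\<exists>p. x p \<noteq> 0 \<and> conj_class G (hd p) = C)"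
  then have "cl G x C = 0" unfolding cl_def by (intro sum.neutral) auto
  moreover assume "cl G x C \<noteq> 0"
  ultimately show False by simp
qed

lemma cl_hom: "cl G \<in> hom (fsupp (cv G (Suc 0))) (fsupp (conj_classes G))"
proof (rule homI)
  fix x assume x: "x \<in> carrier (fsupp (cv G (Suc 0)))"
  have fin: "finite {p. x p \<noteq> 0}" and xv: "\<And>p. x p \<noteq> 0 \<Longrightarrow> p \<in> cv G (Suc 0)"
    using x by (auto simp: fsupp_carrier)
  have "{C. cl G x C \<noteq> 0} \<subseteq> (\<lambda>p. conj_class G (hd p)) ` {p. x p \<noteq> 0}"
    using cl_nz by blast
  then have "finite {C. cl G x C \<noteq> 0}" using fin by (meson finite_imageI finite_subset)
  moreover have "cl G x C \<noteq> 0 \<longrightarrow> C \<in> conj_classes G" for C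
  proof
    assume "cl G x C \<noteq> 0"
    then obtain p where p: "x p \<noteq> 0" "conj_class G (hd p) = C" using cl_nz by blast
    then have "hd p \<in> carrier G" using xv[OF p(1)] by (auto simp: cv1)
    then show "C \<in> conj_classes G" using p by (auto simp: conj_classes_def)
  qed
  ultimately show "cl G x \<in> carrier (fsupp (conj_classes G))" by (simp add: fsupp_carrier)
next
  fix f g assume f: "f \<in> carrier (fsupp (cv G (Suc 0)))" and g: "g \<in> carrier (fsupp (cv G (Suc 0)))"
  show "cl G (f \<otimes>\<^bsub>fsupp (cv G (Suc 0))\<^esub> g) = cl G f \<otimes>\<^bsub>fsupp (conj_classes G)\<^esub> cl G g"
  proof (simp, rule ext)
    fix C
    let ?S = "{x. f x \<noteq> 0} \<union> {x. g x \<noteq> 0}"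
    have fS: "finite ?S" using f g by (simp add: fsupp_carrier)
    have "cl G (\<lambda>x. f x + g x) C = (\<Sum>p\<in>?S. (f p + g p) * (if conj_class G (hd p) = C then 1 else 0))"
      by (rule cl_sup[OF fS]) auto
    also have "\<dots> = (\<Sum>p\<in>?S. f p * (if conj_class G (hd p) = C then 1 else 0))
                  + (\<Sum>p\<in>?S. g p * (if conj_class G (hd p) = C then 1 else 0))"
      by (simp add: distrib_right sum.distrib)
    also have "\<dots> = cl G f C + cl G g C"
      using cl_sup[OF fS, of f C] cl_sup[OF fS, of g C] by auto
    finally show "cl G (\<lambda>x. f x + g x) C = cl G f C + cl G g C" .
  qed
qed

lemma cl_ghom: "group_hom (fsupp (cv G (Suc 0))) (fsupp (conj_classes G)) (cl G)"
  by (simp add: group_hom_def group_hom_axioms_def cl_hom fs.is_group)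

lemma cl_dl: "cl G (dl k [a]) = (\<lambda>C. if C = conj_class G a then k else 0)"
proof (cases "k = 0")
  case True
  then have "{x. dl k [a] x \<noteq> 0} = {}" by (auto simp: dl_def)
  then show ?thesis unfolding cl_def using True by (simp add: fun_eq_iff)
next
  case False
  then have s: "{x. dl k [a] x \<noteq> 0} = {[a]}" by (auto simp: dl_def)
  show ?thesis unfolding cl_def s by (rule ext) (simp add: dl_def)
qed

lemma cl_dl1: "cl G (dl 1 [a]) = dl 1 (conj_class G a)"
  unfolding cl_dl by (auto simp: dl_def)

lemma rho_nz: "rho G F p \<noteq> 0 \<Longrightarrow> \<exists>a. p = [a] \<and> a \<in> carrier G \<and> crep (conj_class G a) = a \<and> F (conj_class G a) \<noteq> 0"
  by (auto simp: rho_def split: if_splits)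

lemma rho_hom: "rho G \<in> hom (fsupp (conj_classes G)) (fsupp (cv G (Suc 0)))"
proof (rule homI)
  fix F assume F: "F \<in> carrier (fsupp (conj_classes G))"
  have fin: "finite {C. F C \<noteq> 0}" using F by (simp add: fsupp_carrier)
  have "{p. rho G F p \<noteq> 0} \<subseteq> (\<lambda>C. [crep C]) ` {C. F C \<noteq> 0}"
  proof
    fix p assume "p \<in> {p. rho G F p \<noteq> 0}"
    then obtain a where a: "p = [a]" "a \<in> carrier G" "crep (conj_class G a) = a" "F (conj_class G a) \<noteq> 0"
      using rho_nz by blast
    then show "p \<in> (\<lambda>C. [crep C]) ` {C. F C \<noteq> 0}" by (metis (mono_tags) image_eqI mem_Collect_eq)
  qed
  then have "finite {p. rho G F p \<noteq> 0}" using fin by (meson finite_imageI finite_subset)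
  moreover have "rho G F p \<noteq> 0 \<longrightarrow> p \<in> cv G (Suc 0)" for p using rho_nz by (auto simp: cv1)
  ultimately show "rho G F \<in> carrier (fsupp (cv G (Suc 0)))" by (simp add: fsupp_carrier)
next
  fix F H
  show "rho G (F \<otimes>\<^bsub>fsupp (conj_classes G)\<^esub> H) = rho G F \<otimes>\<^bsub>fsupp (cv G (Suc 0))\<^esub> rho G H"
  proof (rule ext)
    fix p
    show "rho G (F \<otimes>\<^bsub>fsupp (conj_classes G)\<^esub> H) p = (rho G F \<otimes>\<^bsub>fsupp (cv G (Suc 0))\<^esub> rho G H) p"
    proof (cases "\<exists>a. p = [a] \<and> a \<in> carrier G \<and> crep (conj_class G a) = a")
      case True then show ?thesis unfolding rho_def fsupp_mult by (simp only: if_P)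
    next
      case False then show ?thesis unfolding rho_def fsupp_mult by (simp only: if_not_P) simp
    qed
  qed
qed

lemma rho_ghom: "group_hom (fsupp (conj_classes G)) (fsupp (cv G (Suc 0))) (rho G)"
  by (simp add: group_hom_def group_hom_axioms_def rho_hom fs.is_group)

lemma rho_dl1: "a \<in> carrier G \<Longrightarrow> rho G (dl 1 (conj_class G a)) = dl 1 [crep (conj_class G a)]"
proof (rule ext)
  fix p assume a: "a \<in> carrier G"
  let ?r = "crep (conj_class G a)"
  show "rho G (dl 1 (conj_class G a)) p = dl 1 [?r] p"
  proof (cases "p = [?r]")
    case True
    then show ?thesis using a by (auto simp: rho_def dl_def)
  next
    case False
    have "\<not> (\<exists>b. p = [b] \<and> b \<in> carrier G \<and> crep (conj_class G b) = b \<and> conj_class G b = conj_class G a)"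
      using False by auto
    then show ?thesis using False by (auto simp: rho_def dl_def)
  qed
qed

lemma cl_rho: "F \<in> carrier (fsupp (conj_classes G)) \<Longrightarrow> cl G (rho G F) = F"
proof -
  assume F: "F \<in> carrier (fsupp (conj_classes G))"
  have h1: "cl G \<circ> rho G \<in> hom (fsupp (conj_classes G)) (fsupp (conj_classes G))"
    by (rule Group.hom_compose[OF rho_hom cl_hom])
  have h2: "(\<lambda>x. x) \<in> hom (fsupp (conj_classes G)) (fsupp (conj_classes G))" by (rule homI) auto
  have "(cl G \<circ> rho G) F = (\<lambda>x. x) F"
  proof (rule fsupp_hom_agree[OF h1 h2 fs.is_group _ F])
    fix C assume "C \<in> conj_classes G"
    then obtain a where a: "a \<in> carrier G" "C = conj_class G a" by (auto simp: conj_classes_def)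
    show "(cl G \<circ> rho G) (dl 1 C) = dl 1 C" using a by (simp add: rho_dl1 cl_dl1)
  qed
  then show ?thesis by simp
qed

end

context pqg
begin

abbreviation "KT \<equiv> kernel (fsupp (cv G 2)) (A_grp G) (TT G)"
abbreviation "Gd \<equiv> bar_d G ` KT"

lemma d21: "bar_d G \<in> hom (fsupp (cv G 2)) (fsupp (cv G (Suc 0)))"
  using bar_d_hom[of "Suc 0"] by (simp add: numeral_2_eq_2)

lemma d21_ghom: "group_hom (fsupp (cv G 2)) (fsupp (cv G (Suc 0))) (bar_d G)"
  by (simp add: group_hom_def group_hom_axioms_def d21 fs.is_group)

lemma Gd_subgroup: "subgroup Gd (fsupp (cv G (Suc 0)))"
  by (rule group_hom.subgroup_img_is_subgroup[OF d21_ghom group_hom.subgroup_kernel[OF T_ghom]])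

lemma Gd_intro: "q \<in> carrier (fsupp (cv G 2)) \<Longrightarrow> TT G q = \<one>\<^bsub>A_grp G\<^esub> \<Longrightarrow> bar_d G q \<in> Gd"
  by (auto simp: kernel_def)

lemma Gd_elim: "x \<in> Gd \<Longrightarrow> \<exists>q\<in>carrier (fsupp (cv G 2)). TT G q = \<one>\<^bsub>A_grp G\<^esub> \<and> bar_d G q = x"
  by (auto simp: kernel_def)

lemma Gd_carrier: "x \<in> Gd \<Longrightarrow> x \<in> carrier (fsupp (cv G (Suc 0)))"
  using subgroup.mem_carrier[OF Gd_subgroup] by blast

lemma Gd_add: "x \<in> Gd \<Longrightarrow> y \<in> Gd \<Longrightarrow> (\<lambda>p. x p + y p) \<in> Gd"
  using subgroup.m_closed[OF Gd_subgroup, of x y] by simp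

lemma Gd_neg: "x \<in> Gd \<Longrightarrow> (\<lambda>p. - x p) \<in> Gd"
  using subgroup.m_inv_closed[OF Gd_subgroup, of x] Gd_carrier[of x] by simp

lemma Gd_zero: "(\<lambda>_. 0) \<in> Gd"
  using subgroup.one_closed[OF Gd_subgroup] by simp

lemma Gd_basic: "x \<in> carrier G \<Longrightarrow> y \<in> carrier G \<Longrightarrow> tau G x y = \<one>\<^bsub>GrPq G\<^esub> \<Longrightarrow>
   (\<lambda>p. (if p = [y] then 1 else 0) - (if p = [x \<otimes> y] then 1 else 0) + (if p = [x] then 1 else 0)) \<in> Gd"
  using Gd_intro[of "dl 1 [x, y]"] by (simp add: T_dl1 d_dl2 A_one)

lemma Gd_one: "dl 1 [\<one>] \<in> Gd"
proof -
  have "(\<lambda>p. (if p = [\<one>] then 1 else 0) - (if p = [\<one> \<otimes> \<one>] then 1 else 0) + (if p = [\<one>] then 1 else 0)) \<in> Gd"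
    by (rule Gd_basic) (simp_all add: tau_1_1)
  then show ?thesis by (simp add: dl_def)
qed

lemma Gd_conj_gen:
  assumes a: "a \<in> carrier G" and g: "g \<in> carrier G"
  shows "(\<lambda>p. dl 1 [a] p - dl 1 [g \<otimes> a \<otimes> inv g] p) \<in> Gd"
proof -
  have ga: "g \<otimes> a \<in> carrier G" using a g by simp
  let ?q1 = "dl 1 [g, a]" and ?q2 = "dl 1 [g \<otimes> a, inv g]"
  have T12: "TT G (?q1 \<otimes>\<^bsub>fsupp (cv G 2)\<^esub> ?q2) = \<one>\<^bsub>A_grp G\<^esub>"
  proof -
    interpret T: group_hom "fsupp (cv G 2)" "A_grp G" "TT G" by (rule T_ghom)
    have "TT G (?q1 \<otimes>\<^bsub>fsupp (cv G 2)\<^esub> ?q2) = tau G g a \<otimes>\<^bsub>GrPq G\<^esub> tau G (g \<otimes> a) (inv g)"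
      using a g ga by (simp del: fsupp_mult add: T_dl1 A_mult)
    then show ?thesis using tau_conj[OF g a] by (simp add: A_one)
  qed
  have c12: "?q1 \<otimes>\<^bsub>fsupp (cv G 2)\<^esub> ?q2 \<in> carrier (fsupp (cv G 2))" using a g ga by (simp del: fsupp_mult)
  have "bar_d G (?q1 \<otimes>\<^bsub>fsupp (cv G 2)\<^esub> ?q2) \<in> Gd" by (rule Gd_intro[OF c12 T12])
  moreover have "bar_d G (?q1 \<otimes>\<^bsub>fsupp (cv G 2)\<^esub> ?q2) = bar_d G ?q1 \<otimes>\<^bsub>fsupp (cv G (Suc 0))\<^esub> bar_d G ?q2"
    using a g ga by (simp del: fsupp_mult add: group_hom.hom_mult[OF d21_ghom])
  ultimately have X: "(\<lambda>p. bar_d G ?q1 p + bar_d G ?q2 p) \<in> Gd" by simp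
  have Y: "(\<lambda>p. (if p = [inv g] then 1 else 0) - (if p = [g \<otimes> inv g] then 1 else 0) + (if p = [g] then 1 else 0)) \<in> Gd"
    by (rule Gd_basic) (simp_all add: g tau_inv)
  have Z: "(\<lambda>p. (bar_d G ?q1 p + bar_d G ?q2 p)
        + - ((if p = [inv g] then 1 else 0) - (if p = [g \<otimes> inv g] then 1 else 0) + (if p = [g] then 1 else 0))
        + - dl 1 [\<one>] p) \<in> Gd"
    using Gd_add[OF Gd_add[OF X Gd_neg[OF Y]] Gd_neg[OF Gd_one]] by simp
  have "(\<lambda>p. (bar_d G ?q1 p + bar_d G ?q2 p)
        + - ((if p = [inv g] then 1 else 0) - (if p = [g \<otimes> inv g] then 1 else 0) + (if p = [g] then 1 else 0))
        + - dl 1 [\<one>] p) = (\<lambda>p. dl 1 [a] p - dl 1 [g \<otimes> a \<otimes> inv g] p)"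
    using g by (simp only: d_dl2) (simp add: dl_def fun_eq_iff)
  then show ?thesis using Z by simp
qed

lemma lemma_i:
  assumes x: "x \<in> carrier (fsupp (cv G (Suc 0)))"
  shows "x \<otimes>\<^bsub>fsupp (cv G (Suc 0))\<^esub> inv\<^bsub>fsupp (cv G (Suc 0))\<^esub> rho G (cl G x) \<in> Gd"
proof -
  let ?C1 = "fsupp (cv G (Suc 0))"
  have hid: "(\<lambda>x. x) \<in> hom ?C1 ?C1" by (rule homI) auto
  have hrc: "rho G \<circ> cl G \<in> hom ?C1 ?C1" by (rule Group.hom_compose[OF cl_hom rho_hom])
  have h: "(\<lambda>x. x \<otimes>\<^bsub>?C1\<^esub> inv\<^bsub>?C1\<^esub> (rho G \<circ> cl G) x) \<in> hom ?C1 ?C1"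
    by (rule comm_group.hom_diff[OF fsupp_comm_group hid hrc fs.is_group])
  have "(\<lambda>x. x \<otimes>\<^bsub>?C1\<^esub> inv\<^bsub>?C1\<^esub> (rho G \<circ> cl G) x) x \<in> Gd"
  proof (rule fsupp_hom_subgroup[OF h fs.is_group Gd_subgroup _ x])
    fix v assume "v \<in> cv G (Suc 0)"
    then obtain a where a: "v = [a]" "a \<in> carrier G" by (auto simp: cv1)
    obtain g where g: "g \<in> carrier G" "crep (conj_class G a) = g \<otimes> a \<otimes> inv g" using crep_conj[OF a(2)] by blast
    have "(\<lambda>x. x \<otimes>\<^bsub>?C1\<^esub> inv\<^bsub>?C1\<^esub> (rho G \<circ> cl G) x) (dl 1 v) = (\<lambda>p. dl 1 [a] p - dl 1 [g \<otimes> a \<otimes> inv g] p)"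
      using a g by (simp add: cl_dl1 rho_dl1)
    then show "(\<lambda>x. x \<otimes>\<^bsub>?C1\<^esub> inv\<^bsub>?C1\<^esub> (rho G \<circ> cl G) x) (dl 1 v) \<in> Gd"
      using Gd_conj_gen[OF a(2) g(1)] by simp
  qed
  then show ?thesis by simp
qed

lemma Gd_boundaries: "Gd \<subseteq> boundaries G 1"
  by (auto simp: boundaries_def chain_grp_cv kernel_def numeral_2_eq_2)

lemma Qn:
  assumes a: "a \<in> carrier G"
  shows "(\<lambda>p. dl n [a] p - dl 1 [a [^] n] p) \<in> Gd"
proof (induction n rule: int_induct[of _ 0])
  case base
  have "(\<lambda>p. dl 0 [a] p - dl 1 [a [^] (0::int)] p) = (\<lambda>p. - dl 1 [\<one>] p)" by (simp add: dl_def)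
  then show ?case using Gd_neg[OF Gd_one] by simp
next
  case (step1 i)
  have an: "a [^] i \<in> carrier G" using a by simp
  have e: "a [^] i \<otimes> a = a [^] (i + 1)" using a by (simp add: int_pow_mult)
  have Y: "(\<lambda>p. (if p = [a] then 1 else 0) - (if p = [a [^] i \<otimes> a] then 1 else 0) + (if p = [a [^] i] then 1 else 0)) \<in> Gd"
    by (rule Gd_basic[OF an a]) (simp add: tau_pow a)
  have "(\<lambda>p. (dl i [a] p - dl 1 [a [^] i] p) + ((if p = [a] then 1 else 0) - (if p = [a [^] i \<otimes> a] then 1 else 0) + (if p = [a [^] i] then 1 else 0)))
     = (\<lambda>p. dl (i + 1) [a] p - dl 1 [a [^] (i + 1)] p)"
    unfolding e by (simp add: dl_def fun_eq_iff)
  then show ?case using Gd_add[OF step1(2) Y] by simp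
next
  case (step2 i)
  have an: "a [^] (i - 1) \<in> carrier G" using a by simp
  have e: "a [^] (i - 1) \<otimes> a = a [^] i" using a int_pow_mult[OF a, of "i - 1" 1] by simp
  have Y: "(\<lambda>p. (if p = [a] then 1 else 0) - (if p = [a [^] (i - 1) \<otimes> a] then 1 else 0) + (if p = [a [^] (i - 1)] then 1 else 0)) \<in> Gd"
    by (rule Gd_basic[OF an a]) (simp add: tau_pow a)
  have "(\<lambda>p. (dl i [a] p - dl 1 [a [^] i] p) + - ((if p = [a] then 1 else 0) - (if p = [a [^] (i - 1) \<otimes> a] then 1 else 0) + (if p = [a [^] (i - 1)] then 1 else 0)))
     = (\<lambda>p. dl (i - 1) [a] p - dl 1 [a [^] (i - 1)] p)"
    unfolding e by (simp add: dl_def fun_eq_iff)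
  then show ?case using Gd_add[OF step2(2) Gd_neg[OF Y]] by simp
qed

end

fun linw :: "'a word \<Rightarrow> 'a list \<Rightarrow> int" where
  "linw [] = (\<lambda>_. 0)"
| "linw (l # w) = (\<lambda>p. dl (if fst l then 1 else -1) [snd l] p + linw w p)"

definition Rset :: "('a, 'b) monoid_scheme \<Rightarrow> ('a set \<Rightarrow> int) set" where
  "Rset G = {B_rel G a n | a n. a \<in> carrier G}"

context pqg
begin

abbreviation "RR \<equiv> generate (fsupp (conj_classes G)) (Rset G)"

lemma B_rel_cl:
  assumes a: "a \<in> carrier G"
  shows "cl G (\<lambda>p. dl n [a] p - dl 1 [a [^] n] p) = B_rel G a n"
proof -
  interpret c: group_hom "fsupp (cv G (Suc 0))" "fsupp (conj_classes G)" "cl G" by (rule cl_ghom)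
  have an: "a [^] n \<in> carrier G" using a by simp
  have e: "(\<lambda>p. dl n [a] p - dl 1 [a [^] n] p) = dl n [a] \<otimes>\<^bsub>fsupp (cv G (Suc 0))\<^esub> inv\<^bsub>fsupp (cv G (Suc 0))\<^esub> dl 1 [a [^] n]"
    using a an by simp
  have "cl G (dl n [a] \<otimes>\<^bsub>fsupp (cv G (Suc 0))\<^esub> inv\<^bsub>fsupp (cv G (Suc 0))\<^esub> dl 1 [a [^] n])
      = cl G (dl n [a]) \<otimes>\<^bsub>fsupp (conj_classes G)\<^esub> inv\<^bsub>fsupp (conj_classes G)\<^esub> cl G (dl 1 [a [^] n])"
    using a an by (simp del: fsupp_mult fsupp_inv)
  also have "\<dots> = B_rel G a n"
    using a an c.hom_closed[OF dl_cv1[OF an, of 1]] by (simp add: cl_dl B_rel_def fun_eq_iff)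
  finally show ?thesis using e by simp
qed

lemma RR_lift: "r \<in> RR \<Longrightarrow> \<exists>y\<in>Gd. cl G y = r"
proof (induction r rule: generate.induct)
  case one
  interpret c: group_hom "fsupp (cv G (Suc 0))" "fsupp (conj_classes G)" "cl G" by (rule cl_ghom)
  have "cl G (\<lambda>_. 0) = \<one>\<^bsub>fsupp (conj_classes G)\<^esub>" using c.hom_one by simp
  then show ?case using Gd_zero by blast
next
  case (incl h)
  then obtain a n where h: "h = B_rel G a n" "a \<in> carrier G" by (auto simp: Rset_def)
  then show ?case using Qn[OF h(2), of n] B_rel_cl[OF h(2), of n] by blast
next
  case (inv h)
  interpret c: group_hom "fsupp (cv G (Suc 0))" "fsupp (conj_classes G)" "cl G" by (rule cl_ghom)
  from inv obtain a n where h: "h = B_rel G a n" "a \<in> carrier G" by (auto simp: Rset_def)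
  let ?y = "\<lambda>p. dl n [a] p - dl 1 [a [^] n] p"
  have y: "?y \<in> Gd" using Qn[OF h(2)] by blast
  have yc: "?y \<in> carrier (fsupp (cv G (Suc 0)))" using Gd_carrier[OF y] .
  have "cl G (inv\<^bsub>fsupp (cv G (Suc 0))\<^esub> ?y) = inv\<^bsub>fsupp (conj_classes G)\<^esub> h"
    using c.hom_inv[OF yc] B_rel_cl[OF h(2), of n] h(1) by simp
  moreover have "inv\<^bsub>fsupp (cv G (Suc 0))\<^esub> ?y \<in> Gd"
    using subgroup.m_inv_closed[OF Gd_subgroup y] .
  ultimately show ?case by blast
next
  case (eng h1 h2)
  interpret c: group_hom "fsupp (cv G (Suc 0))" "fsupp (conj_classes G)" "cl G" by (rule cl_ghom)
  from eng obtain y1 y2 where y: "y1 \<in> Gd" "cl G y1 = h1" "y2 \<in> Gd" "cl G y2 = h2" by blast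
  have "cl G (y1 \<otimes>\<^bsub>fsupp (cv G (Suc 0))\<^esub> y2) = h1 \<otimes>\<^bsub>fsupp (conj_classes G)\<^esub> h2"
    using c.hom_mult[OF Gd_carrier[OF y(1)] Gd_carrier[OF y(3)]] y by simp
  moreover have "y1 \<otimes>\<^bsub>fsupp (cv G (Suc 0))\<^esub> y2 \<in> Gd" using subgroup.m_closed[OF Gd_subgroup y(1,3)] .
  ultimately show ?case by blast
qed

lemma Good:
  assumes x: "x \<in> carrier (fsupp (cv G (Suc 0)))" and r: "cl G x \<in> RR"
  shows "x \<in> Gd"
proof -
  let ?C1 = "fsupp (cv G (Suc 0))"
  interpret c: group_hom "fsupp (cv G (Suc 0))" "fsupp (conj_classes G)" "cl G" by (rule cl_ghom)
  interpret r: group_hom "fsupp (conj_classes G)" "fsupp (cv G (Suc 0))" "rho G" by (rule rho_ghom)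
  obtain y where y: "y \<in> Gd" "cl G y = cl G x" using RR_lift[OF r] by blast
  have yc: "y \<in> carrier ?C1" using Gd_carrier[OF y(1)] .
  let ?z = "x \<otimes>\<^bsub>?C1\<^esub> inv\<^bsub>?C1\<^esub> y"
  have zc: "?z \<in> carrier ?C1" using x yc by (simp del: fsupp_mult fsupp_inv)
  have "cl G ?z = cl G x \<otimes>\<^bsub>fsupp (conj_classes G)\<^esub> inv\<^bsub>fsupp (conj_classes G)\<^esub> cl G x"
    using x yc y(2) by (simp del: fsupp_mult fsupp_inv)
  also have "\<dots> = \<one>\<^bsub>fsupp (conj_classes G)\<^esub>" using x by (simp del: fsupp_mult fsupp_inv fsupp_one)
  finally have "rho G (cl G ?z) = \<one>\<^bsub>?C1\<^esub>" by (simp only: r.hom_one)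
  then have "?z \<otimes>\<^bsub>?C1\<^esub> inv\<^bsub>?C1\<^esub> rho G (cl G ?z) = ?z" using zc by (simp only: fs.inv_one fs.r_one)
  then have zG: "?z \<in> Gd" using lemma_i[OF zc] by simp
  have "?z \<otimes>\<^bsub>?C1\<^esub> y \<in> Gd" using subgroup.m_closed[OF Gd_subgroup zG y(1)] .
  moreover have "?z \<otimes>\<^bsub>?C1\<^esub> y = x" using x yc by (simp only: fs.m_assoc fs.inv_closed fs.l_inv fs.r_one)
  ultimately show ?thesis by simp
qed

lemma lin_carrier: "w \<in> pq_words G \<Longrightarrow> linw w \<in> carrier (fsupp (cv G (Suc 0)))"
proof (induction w)
  case Nil then show ?case using fs.one_closed by simp
next
  case (Cons l w)
  then have "dl (if fst l then 1 else -1) [snd l] \<otimes>\<^bsub>fsupp (cv G (Suc 0))\<^esub> linw w \<in> carrier (fsupp (cv G (Suc 0)))"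
    by (simp del: fsupp_mult)
  then show ?case by simp
qed

lemma sig_tau_shift:
  assumes h: "h \<in> carrier G" and e: "e \<in> carrier G" and U: "U \<in> KK"
  shows "sig G h \<otimes>\<^bsub>GrPq G\<^esub> (sig G e \<otimes>\<^bsub>GrPq G\<^esub> U) = sig G (h \<otimes> e) \<otimes>\<^bsub>GrPq G\<^esub> (U \<otimes>\<^bsub>GrPq G\<^esub> tau G h e)"
proof -
  have Uc: "U \<in> carrier (GrPq G)" using U by (rule KK_carrier)
  have tc: "tau G h e \<in> carrier (GrPq G)" using h e by (rule tau_carrier)
  have sc: "sig G h \<in> carrier (GrPq G)" "sig G e \<in> carrier (GrPq G)" "sig G (h \<otimes> e) \<in> carrier (GrPq G)"
    using h e by auto
  have st: "sig G (h \<otimes> e) \<otimes>\<^bsub>GrPq G\<^esub> tau G h e = sig G h \<otimes>\<^bsub>GrPq G\<^esub> sig G e"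
  proof -
    have "sig G (h \<otimes> e) \<otimes>\<^bsub>GrPq G\<^esub> tau G h e = tau G h e \<otimes>\<^bsub>GrPq G\<^esub> sig G (h \<otimes> e)"
      using kernel_central[OF tau_K[OF h e] sc(3)] by (rule HOL.sym)
    also have "\<dots> = sig G h \<otimes>\<^bsub>GrPq G\<^esub> sig G e"
      unfolding tau_def using sc by (simp add: GR.m_assoc)
    finally show ?thesis .
  qed
  have "sig G (h \<otimes> e) \<otimes>\<^bsub>GrPq G\<^esub> (U \<otimes>\<^bsub>GrPq G\<^esub> tau G h e) = sig G (h \<otimes> e) \<otimes>\<^bsub>GrPq G\<^esub> (tau G h e \<otimes>\<^bsub>GrPq G\<^esub> U)"
    by (simp only: kernel_central[OF tau_K[OF h e] Uc])
  also have "\<dots> = (sig G (h \<otimes> e) \<otimes>\<^bsub>GrPq G\<^esub> tau G h e) \<otimes>\<^bsub>GrPq G\<^esub> U"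
    using sc tc Uc by (simp only: GR.m_assoc)
  also have "\<dots> = sig G h \<otimes>\<^bsub>GrPq G\<^esub> sig G e \<otimes>\<^bsub>GrPq G\<^esub> U" by (simp only: st)
  also have "\<dots> = sig G h \<otimes>\<^bsub>GrPq G\<^esub> (sig G e \<otimes>\<^bsub>GrPq G\<^esub> U)"
    using sc Uc by (simp only: GR.m_assoc)
  finally show ?thesis by (rule HOL.sym)
qed

end

context pqg
begin

lemma TT_K: "c \<in> carrier (fsupp (cv G 2)) \<Longrightarrow> TT G c \<in> KK"
  using group_hom.hom_closed[OF T_ghom] by (simp add: A_carrier)

lemma bar_d2_carrier: "c \<in> carrier (fsupp (cv G 2)) \<Longrightarrow> bar_d G c \<in> carrier (fsupp (cv G (Suc 0)))"
  using group_hom.hom_closed[OF d21_ghom] by simp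

lemma word_chain:
  "w \<in> pq_words G \<Longrightarrow> \<exists>c\<in>carrier (fsupp (cv G 2)).
     bar_d G c = (\<lambda>p. linw w p - dl 1 [eval_word G w] p) \<and>
     pq_class G w = sig G (eval_word G w) \<otimes>\<^bsub>GrPq G\<^esub> TT G c"
proof (induction w)
  case Nil
  interpret T: group_hom "fsupp (cv G 2)" "A_grp G" "TT G" by (rule T_ghom)
  interpret D: group_hom "fsupp (cv G 2)" "fsupp (cv G (Suc 0))" "bar_d G" by (rule d21_ghom)
  let ?c = "inv\<^bsub>fsupp (cv G 2)\<^esub> dl 1 [\<one>, \<one>]"
  have cc: "?c \<in> carrier (fsupp (cv G 2))" by (simp del: fsupp_inv)
  have "bar_d G ?c = inv\<^bsub>fsupp (cv G (Suc 0))\<^esub> bar_d G (dl 1 [\<one>, \<one>])"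
    by (simp del: fsupp_inv)
  also have "\<dots> = (\<lambda>p. - bar_d G (dl 1 [\<one>, \<one>]) p)" using bar_d2_carrier by simp
  also have "\<dots> = (\<lambda>p. linw [] p - dl 1 [eval_word G []] p)" by (simp only: d_dl2) (simp add: dl_def fun_eq_iff)
  finally have d: "bar_d G ?c = (\<lambda>p. linw [] p - dl 1 [eval_word G []] p)" .
  have "TT G ?c = inv\<^bsub>A_grp G\<^esub> TT G (dl 1 [\<one>, \<one>])" by (simp del: fsupp_inv)
  also have "\<dots> = \<one>\<^bsub>GrPq G\<^esub>" by (simp add: T_dl1 tau_1_1 A_one[symmetric])
  finally have "pq_class G [] = sig G (eval_word G []) \<otimes>\<^bsub>GrPq G\<^esub> TT G ?c"
    by (simp add: sig_one cls_Nil)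
  then show ?case using cc d by blast
next
  case (Cons l w)
  interpret T: group_hom "fsupp (cv G 2)" "A_grp G" "TT G" by (rule T_ghom)
  interpret D: group_hom "fsupp (cv G 2)" "fsupp (cv G (Suc 0))" "bar_d G" by (rule d21_ghom)
  obtain b g where l: "l = (b, g)" by (cases l)
  have g: "g \<in> carrier G" and w: "w \<in> pq_words G" using Cons.prems l by auto
  obtain c' where c': "c' \<in> carrier (fsupp (cv G 2))"
    "bar_d G c' = (\<lambda>p. linw w p - dl 1 [eval_word G w] p)"
    "pq_class G w = sig G (eval_word G w) \<otimes>\<^bsub>GrPq G\<^esub> TT G c'"
    using Cons.IH[OF w] by blast
  define e where "e = eval_word G w"
  have e: "e \<in> carrier G" using w by (simp add: e_def)
  define h where "h = lv G l"
  have h: "h \<in> carrier G" using g l by (simp add: h_def)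
  have ev: "eval_word G (l # w) = h \<otimes> e" by (simp add: h_def e_def)
  have cls: "pq_class G (l # w) = sig G (h \<otimes> e) \<otimes>\<^bsub>GrPq G\<^esub> (TT G c' \<otimes>\<^bsub>GrPq G\<^esub> tau G h e)"
  proof -
    have "pq_class G (l # w) = sig G h \<otimes>\<^bsub>GrPq G\<^esub> (sig G e \<otimes>\<^bsub>GrPq G\<^esub> TT G c')"
      using g l w c'(3) by (simp add: cls_Cons_sig h_def e_def)
    also have "\<dots> = sig G (h \<otimes> e) \<otimes>\<^bsub>GrPq G\<^esub> (TT G c' \<otimes>\<^bsub>GrPq G\<^esub> tau G h e)"
      by (rule sig_tau_shift[OF h e TT_K[OF c'(1)]])
    finally show ?thesis .
  qed
  have he: "h \<otimes> e \<in> carrier G" using h e by simp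
  show ?case
  proof (cases b)
    case True
    then have hg: "h = g" using l by (simp add: h_def lv_def)
    let ?c = "c' \<otimes>\<^bsub>fsupp (cv G 2)\<^esub> dl 1 [h, e]"
    have cc: "?c \<in> carrier (fsupp (cv G 2))" using c'(1) h e by (simp del: fsupp_mult)
    have "bar_d G ?c = (\<lambda>p. bar_d G c' p + bar_d G (dl 1 [h, e]) p)"
      using c'(1) h e by (simp del: fsupp_mult) simp
    also have "\<dots> = (\<lambda>p. linw (l # w) p - dl 1 [eval_word G (l # w)] p)"
      unfolding c'(2) d_dl2 ev using True l hg by (simp add: dl_def e_def fun_eq_iff)
    finally have d: "bar_d G ?c = (\<lambda>p. linw (l # w) p - dl 1 [eval_word G (l # w)] p)" .
    have "TT G ?c = TT G c' \<otimes>\<^bsub>GrPq G\<^esub> tau G h e"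
      using c'(1) h e by (simp del: fsupp_mult add: T_dl1 A_mult)
    then have "pq_class G (l # w) = sig G (eval_word G (l # w)) \<otimes>\<^bsub>GrPq G\<^esub> TT G ?c"
      using cls ev by simp
    then show ?thesis using cc d by blast
  next
    case False
    then have hg: "h = inv g" using l by (simp add: h_def lv_def)
    let ?c = "c' \<otimes>\<^bsub>fsupp (cv G 2)\<^esub> dl 1 [h, e] \<otimes>\<^bsub>fsupp (cv G 2)\<^esub> inv\<^bsub>fsupp (cv G 2)\<^esub> dl 1 [g, h]
              \<otimes>\<^bsub>fsupp (cv G 2)\<^esub> inv\<^bsub>fsupp (cv G 2)\<^esub> dl 1 [\<one>, \<one>]"
    have cc: "?c \<in> carrier (fsupp (cv G 2))" using c'(1) h e g by (simp del: fsupp_mult fsupp_inv)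
    have "bar_d G ?c = (\<lambda>p. bar_d G c' p + bar_d G (dl 1 [h, e]) p - bar_d G (dl 1 [g, h]) p - bar_d G (dl 1 [\<one>, \<one>]) p)"
      using c'(1) h e g by (simp del: fsupp_mult fsupp_inv) (simp add: bar_d2_carrier)
    also have "\<dots> = (\<lambda>p. linw (l # w) p - dl 1 [eval_word G (l # w)] p)"
      unfolding c'(2) d_dl2 ev using False l hg g by (simp add: dl_def e_def fun_eq_iff)
    finally have d: "bar_d G ?c = (\<lambda>p. linw (l # w) p - dl 1 [eval_word G (l # w)] p)" .
    have "TT G ?c = TT G c' \<otimes>\<^bsub>A_grp G\<^esub> tau G h e \<otimes>\<^bsub>A_grp G\<^esub> inv\<^bsub>A_grp G\<^esub> tau G g h
             \<otimes>\<^bsub>A_grp G\<^esub> inv\<^bsub>A_grp G\<^esub> tau G \<one> \<one>"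
      using c'(1) h e g by (simp del: fsupp_mult fsupp_inv add: T_dl1)
    also have "\<dots> = TT G c' \<otimes>\<^bsub>GrPq G\<^esub> tau G h e"
    proof -
      interpret A: comm_group "A_grp G" by (rule A_comm_group)
      have t1: "tau G h e \<in> carrier (A_grp G)" using h e by (simp add: A_carrier tau_K)
      have t2: "TT G c' \<in> carrier (A_grp G)" using T.hom_closed[OF c'(1)] .
      have "tau G g h = \<one>\<^bsub>A_grp G\<^esub>" "tau G \<one> \<one> = \<one>\<^bsub>A_grp G\<^esub>"
        using hg g by (simp_all add: tau_inv tau_1_1 A_one)
      then show ?thesis using t1 t2 by (simp add: A_mult[symmetric])
    qed
    finally have "pq_class G (l # w) = sig G (eval_word G (l # w)) \<otimes>\<^bsub>GrPq G\<^esub> TT G ?c"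
      using cls ev by simp
    then show ?thesis using cc d by blast
  qed
qed

end

lemma lift_carrier:
  "carrier ((G1\<lparr>carrier := Z\<rparr>) Mod N) = (\<lambda>z. N #>\<^bsub>G1\<^esub> z) ` Z"
  by (auto simp: FactGroup_def RCOSETS_def)

lemma lift_val:
  assumes G1: "group G1" and N: "N \<lhd> G1" and G2: "group G2"
    and h: "h \<in> hom G1 G2" and Nk: "\<And>n. n \<in> N \<Longrightarrow> h n = \<one>\<^bsub>G2\<^esub>"
    and z: "z \<in> carrier G1"
  shows "h (SOME x. x \<in> N #>\<^bsub>G1\<^esub> z) = h z"
proof -
  interpret n: normal N G1 by (rule N)
  interpret hh: group_hom G1 G2 h using G1 G2 h by (simp add: group_hom_def group_hom_axioms_def)
  have "z \<in> N #>\<^bsub>G1\<^esub> z" using z n.subgroup_axioms by (rule n.rcos_self)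
  then have "(SOME x. x \<in> N #>\<^bsub>G1\<^esub> z) \<in> N #>\<^bsub>G1\<^esub> z" by (rule someI)
  then obtain m where m: "m \<in> N" "(SOME x. x \<in> N #>\<^bsub>G1\<^esub> z) = m \<otimes>\<^bsub>G1\<^esub> z"
    by (auto simp: r_coset_def)
  have "h (m \<otimes>\<^bsub>G1\<^esub> z) = h m \<otimes>\<^bsub>G2\<^esub> h z" using m z n.subset by (intro hh.hom_mult) auto
  also have "\<dots> = h z" using Nk[OF m(1)] z by simp
  finally show ?thesis using m by simp
qed

lemma lift_hom:
  assumes G1: "group G1" and N: "N \<lhd> G1" and Z: "Z \<subseteq> carrier G1" and G2: "group G2"
    and h: "h \<in> hom G1 G2" and Nk: "\<And>n. n \<in> N \<Longrightarrow> h n = \<one>\<^bsub>G2\<^esub>"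
  shows "(\<lambda>SX. h (SOME x. x \<in> SX)) \<in> hom ((G1\<lparr>carrier := Z\<rparr>) Mod N) G2"
proof (rule homI)
  interpret n: normal N G1 by (rule N)
  interpret hh: group_hom G1 G2 h using G1 G2 h by (simp add: group_hom_def group_hom_axioms_def)
  fix SX assume "SX \<in> carrier ((G1\<lparr>carrier := Z\<rparr>) Mod N)"
  then obtain z where z: "z \<in> Z" "SX = N #>\<^bsub>G1\<^esub> z" by (auto simp: lift_carrier)
  then show "h (SOME x. x \<in> SX) \<in> carrier G2" using lift_val[OF G1 N G2 h Nk] Z by auto
next
  interpret n: normal N G1 by (rule N)
  interpret hh: group_hom G1 G2 h using G1 G2 h by (simp add: group_hom_def group_hom_axioms_def)
  fix SX SY assume "SX \<in> carrier ((G1\<lparr>carrier := Z\<rparr>) Mod N)" "SY \<in> carrier ((G1\<lparr>carrier := Z\<rparr>) Mod N)"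
  then obtain x y where x: "x \<in> Z" "SX = N #>\<^bsub>G1\<^esub> x" and y: "y \<in> Z" "SY = N #>\<^bsub>G1\<^esub> y"
    by (auto simp: lift_carrier)
  have xc: "x \<in> carrier G1" and yc: "y \<in> carrier G1" using x y Z by auto
  have "SX \<otimes>\<^bsub>(G1\<lparr>carrier := Z\<rparr>) Mod N\<^esub> SY = N #>\<^bsub>G1\<^esub> (x \<otimes>\<^bsub>G1\<^esub> y)"
    using x y xc yc by (simp add: FactGroup_def n.rcos_sum)
  then show "h (SOME z. z \<in> SX \<otimes>\<^bsub>(G1\<lparr>carrier := Z\<rparr>) Mod N\<^esub> SY) = h (SOME z. z \<in> SX) \<otimes>\<^bsub>G2\<^esub> h (SOME z. z \<in> SY)"
    using lift_val[OF G1 N G2 h Nk] x y xc yc by simp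
qed

context pqg
begin

abbreviation "piR \<equiv> (\<lambda>x. RR #>\<^bsub>fsupp (conj_classes G)\<^esub> x)"

lemma B_rel_carrier: "a \<in> carrier G \<Longrightarrow> B_rel G a n \<in> carrier (fsupp (conj_classes G))"
proof -
  assume a: "a \<in> carrier G"
  have "{C. B_rel G a n C \<noteq> 0} \<subseteq> {conj_class G a, conj_class G (a [^] n)}"
    by (auto simp: B_rel_def split: if_splits)
  moreover have "conj_class G a \<in> conj_classes G" "conj_class G (a [^] n) \<in> conj_classes G"
    using a by (auto simp: conj_classes_def)
  ultimately show ?thesis by (auto simp: fsupp_carrier intro: finite_subset)
qed

lemma RR_subgroup: "subgroup RR (fsupp (conj_classes G))"
  by (rule fs.generate_is_subgroup) (auto simp: B_rel_carrier Rset_def)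

lemma RR_normal: "RR \<lhd> fsupp (conj_classes G)"
  by (rule fs.subgroup_imp_normal[OF RR_subgroup])

lemma piR_hom: "piR \<in> hom (fsupp (conj_classes G)) (fsupp (conj_classes G) Mod RR)"
  by (rule normal.r_coset_hom_Mod[OF RR_normal])

lemma B_grp_eq: "B_grp G = fsupp (conj_classes G) Mod RR"
  by (simp add: B_grp_def free_ab_Cl_fsupp Rset_def)

lemma B_group: "group (fsupp (conj_classes G) Mod RR)"
  by (rule normal.factorgroup_is_group[OF RR_normal])

lemma piR_ghom: "group_hom (fsupp (conj_classes G)) (fsupp (conj_classes G) Mod RR) piR"
  by (simp add: group_hom_def group_hom_axioms_def piR_hom B_group fs.is_group)

lemma piR_RR: "x \<in> RR \<Longrightarrow> piR x = RR"
  using fs.coset_join2[OF _ RR_subgroup] subgroup.mem_carrier[OF RR_subgroup] by blast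

lemma piR_eq_RR: "x \<in> carrier (fsupp (conj_classes G)) \<Longrightarrow> piR x = RR \<Longrightarrow> x \<in> RR"
  using fs.rcos_self[OF _ RR_subgroup] by force

definition Phi :: "'a word \<Rightarrow> ('a set \<Rightarrow> int) set" where "Phi w = piR (cl G (linw w))"

lemma linw_append: "linw (u @ v) = (\<lambda>p. linw u p + linw v p)"
  by (induction u) (auto simp: fun_eq_iff)

lemma cl_linw_carrier: "w \<in> pq_words G \<Longrightarrow> cl G (linw w) \<in> carrier (fsupp (conj_classes G))"
  using group_hom.hom_closed[OF cl_ghom lin_carrier] by blast

lemma Phi_append: "u \<in> pq_words G \<Longrightarrow> v \<in> pq_words G \<Longrightarrow>
   Phi (u @ v) = Phi u \<otimes>\<^bsub>fsupp (conj_classes G) Mod RR\<^esub> Phi v"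
proof -
  assume u: "u \<in> pq_words G" and v: "v \<in> pq_words G"
  interpret c: group_hom "fsupp (cv G (Suc 0))" "fsupp (conj_classes G)" "cl G" by (rule cl_ghom)
  interpret p: group_hom "fsupp (conj_classes G)" "fsupp (conj_classes G) Mod RR" piR by (rule piR_ghom)
  have "linw (u @ v) = linw u \<otimes>\<^bsub>fsupp (cv G (Suc 0))\<^esub> linw v" by (simp add: linw_append)
  then have "cl G (linw (u @ v)) = cl G (linw u) \<otimes>\<^bsub>fsupp (conj_classes G)\<^esub> cl G (linw v)"
    using u v lin_carrier by (simp del: fsupp_mult)
  then show ?thesis unfolding Phi_def using u v cl_linw_carrier by (simp del: fsupp_mult)
qed

lemma Phi_diff_RR:
  assumes "x \<in> carrier (fsupp (conj_classes G))" "r \<in> RR"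
  shows "piR (x \<otimes>\<^bsub>fsupp (conj_classes G)\<^esub> r) = piR x"
proof -
  interpret p: group_hom "fsupp (conj_classes G)" "fsupp (conj_classes G) Mod RR" piR by (rule piR_ghom)
  have rc: "r \<in> carrier (fsupp (conj_classes G))" using assms(2) subgroup.mem_carrier[OF RR_subgroup] by blast
  have "piR (x \<otimes>\<^bsub>fsupp (conj_classes G)\<^esub> r) = piR x \<otimes>\<^bsub>fsupp (conj_classes G) Mod RR\<^esub> piR r"
    using assms(1) rc by (simp del: fsupp_mult)
  moreover have "piR r = \<one>\<^bsub>fsupp (conj_classes G) Mod RR\<^esub>" using piR_RR[OF assms(2)] by (simp add: FactGroup_def)
  ultimately show ?thesis using monoid.r_one[OF group.is_monoid[OF B_group] p.hom_closed[OF assms(1)]] by (simp only:)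
qed

end

context pqg
begin

lemma linw_rep: "linw (replicate m (b, a)) = dl (if b then int m else - int m) [a]"
  by (induction m) (auto simp: dl_def fun_eq_iff)

lemma linw_sigma_pow: "linw (sigma_pow_word a n) = dl n [a]"
  by (simp add: sigma_pow_word_def linw_rep)

lemma linw_single: "linw [(True, a)] = dl 1 [a]"
  by (simp add: fun_eq_iff)

lemma Rset_RR: "a \<in> carrier G \<Longrightarrow> B_rel G a n \<in> RR"
  by (rule generate.incl) (auto simp: Rset_def)

lemma Phi_cong: "pq_eq G u v \<Longrightarrow> Phi u = Phi v"
proof (induction rule: pq_eq.induct)
  case (cong u v w1 w2)
  have uv: "u \<in> pq_words G" "v \<in> pq_words G" using cong(1) pq_eq_words by auto
  then show ?case using cong by (simp add: Phi_append)
next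
  case (cancel x b)
  have "linw [(b, x), (\<not> b, x)] = linw []" by (cases b) (auto simp: dl_def fun_eq_iff)
  then show ?case by (simp add: Phi_def)
next
  case (rel_conj a b)
  have ab: "a \<otimes> b \<otimes> inv a \<in> conj_class G b" using rel_conj unfolding conj_class_def by blast
  have "linw [(True, a \<otimes> b \<otimes> inv a)] = dl 1 [a \<otimes> b \<otimes> inv a]" by (simp add: fun_eq_iff)
  moreover have "linw [(True, a), (True, b), (False, a)] = dl 1 [b]" by (auto simp: dl_def fun_eq_iff)
  moreover have "conj_class G (a \<otimes> b \<otimes> inv a) = conj_class G b" using conj_class_eq[OF rel_conj(2) ab] .
  ultimately show ?case by (simp add: Phi_def cl_dl1)
next
  case (rel_pow a n)
  have an: "a [^] n \<in> carrier G" using rel_pow by simp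
  have c1: "cl G (dl 1 [a [^] n]) \<in> carrier (fsupp (conj_classes G))"
    using group_hom.hom_closed[OF cl_ghom dl_cv1[OF an]] .
  have e: "cl G (dl n [a]) = cl G (dl 1 [a [^] n]) \<otimes>\<^bsub>fsupp (conj_classes G)\<^esub> B_rel G a n"
    by (simp add: cl_dl B_rel_def fun_eq_iff)
  have "Phi (sigma_pow_word a n) = piR (cl G (dl n [a]))" by (simp add: Phi_def linw_sigma_pow)
  also have "\<dots> = piR (cl G (dl 1 [a [^] n]))"
    unfolding e by (rule Phi_diff_RR[OF c1 Rset_RR[OF rel_pow]])
  also have "\<dots> = Phi [(True, a [^] n)]" by (simp only: Phi_def linw_single)
  finally show ?case by (rule HOL.sym)
next
  case rel_unit
  have br: "B_rel G \<one> 0 \<in> RR" by (rule Rset_RR) simp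
  have brc: "B_rel G \<one> 0 \<in> carrier (fsupp (conj_classes G))" using B_rel_carrier by simp
  have ir: "inv\<^bsub>fsupp (conj_classes G)\<^esub> B_rel G \<one> 0 \<in> RR"
    using subgroup.m_inv_closed[OF RR_subgroup br] .
  have e: "cl G (dl 1 [\<one>]) = (\<lambda>_. 0) \<otimes>\<^bsub>fsupp (conj_classes G)\<^esub> inv\<^bsub>fsupp (conj_classes G)\<^esub> B_rel G \<one> 0"
    using brc by (simp add: cl_dl B_rel_def fun_eq_iff)
  have z: "(\<lambda>_. 0::int) \<in> carrier (fsupp (conj_classes G))" using fs.one_closed by simp
  have "Phi [(True, \<one>)] = piR (cl G (dl 1 [\<one>]))" by (simp only: Phi_def linw_single)
  also have "\<dots> = piR (\<lambda>_. 0)" unfolding e by (rule Phi_diff_RR[OF z ir])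
  also have "\<dots> = Phi []" using group_hom.hom_one[OF cl_ghom] by (simp add: Phi_def)
  finally show ?case .
qed auto

definition f2 :: "'a word set \<Rightarrow> ('a set \<Rightarrow> int) set" where
  "f2 S = Phi (SOME w. w \<in> S)"

lemma f2_class: "w \<in> pq_words G \<Longrightarrow> f2 (pq_class G w) = Phi w"
proof -
  assume w: "w \<in> pq_words G"
  have "w \<in> pq_class G w" using w by (rule pq_class_self)
  then have "(SOME x. x \<in> pq_class G w) \<in> pq_class G w" by (rule someI)
  then have "pq_eq G w (SOME x. x \<in> pq_class G w)" by (simp add: pq_class_def)
  then show ?thesis unfolding f2_def using Phi_cong by metis
qed

lemma Phi_carrier: "w \<in> pq_words G \<Longrightarrow> Phi w \<in> carrier (fsupp (conj_classes G) Mod RR)"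
  unfolding Phi_def using group_hom.hom_closed[OF piR_ghom cl_linw_carrier] by blast

lemma f2_hom: "f2 \<in> hom (A_grp G) (fsupp (conj_classes G) Mod RR)"
proof (rule homI)
  fix x assume "x \<in> carrier (A_grp G)"
  then obtain w where "w \<in> pq_words G" "x = pq_class G w" by (auto simp: A_carrier kernel_def GrPq_carrier)
  then show "f2 x \<in> carrier (fsupp (conj_classes G) Mod RR)" by (simp add: f2_class Phi_carrier)
next
  fix x y assume "x \<in> carrier (A_grp G)" "y \<in> carrier (A_grp G)"
  then obtain u v where "u \<in> pq_words G" "x = pq_class G u" "v \<in> pq_words G" "y = pq_class G v"
    by (auto simp: A_carrier kernel_def GrPq_carrier)
  then show "f2 (x \<otimes>\<^bsub>A_grp G\<^esub> y) = f2 x \<otimes>\<^bsub>fsupp (conj_classes G) Mod RR\<^esub> f2 y"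
    by (simp add: A_mult GrPq_mult_class f2_class Phi_append)
qed

lemma tau_class: "x \<in> carrier G \<Longrightarrow> y \<in> carrier G \<Longrightarrow>
   tau G x y = pq_class G [(True, x), (True, y), (False, x \<otimes> y)]"
proof -
  assume x: "x \<in> carrier G" and y: "y \<in> carrier G"
  have "pq_class G [(True, x), (True, y), (False, x \<otimes> y)] = sig G x \<otimes>\<^bsub>GrPq G\<^esub> (sig G y \<otimes>\<^bsub>GrPq G\<^esub> pq_class G [(False, x \<otimes> y)])"
    using x y GrPq_mult_class[of "[(True, x)]" "[(True, y), (False, x \<otimes> y)]"]
      GrPq_mult_class[of "[(True, y)]" "[(False, x \<otimes> y)]"] by (simp add: sig_def)
  also have "\<dots> = tau G x y" using x y by (simp add: cls_neg tau_def GR.m_assoc)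
  finally show ?thesis by (rule HOL.sym)
qed

lemma F2T: "c \<in> carrier (fsupp (cv G 2)) \<Longrightarrow> f2 (TT G c) = piR (cl G (bar_d G c))"
proof -
  assume c: "c \<in> carrier (fsupp (cv G 2))"
  have h1: "f2 \<circ> TT G \<in> hom (fsupp (cv G 2)) (fsupp (conj_classes G) Mod RR)"
    by (rule Group.hom_compose[OF T_hom f2_hom])
  have h2: "piR \<circ> (cl G \<circ> bar_d G) \<in> hom (fsupp (cv G 2)) (fsupp (conj_classes G) Mod RR)"
    by (rule Group.hom_compose[OF Group.hom_compose[OF d21 cl_hom] piR_hom])
  have "(f2 \<circ> TT G) c = (piR \<circ> (cl G \<circ> bar_d G)) c"
  proof (rule fsupp_hom_agree[OF h1 h2 B_group _ c])
    fix v assume "v \<in> cv G 2"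
    then obtain x y where v: "v = [x, y]" "x \<in> carrier G" "y \<in> carrier G" by (auto simp: cv2)
    have w: "[(True, x), (True, y), (False, x \<otimes> y)] \<in> pq_words G" using v by simp
    have "linw [(True, x), (True, y), (False, x \<otimes> y)] = bar_d G (dl 1 [x, y])"
      by (simp only: d_dl2) (auto simp: dl_def fun_eq_iff)
    then show "(f2 \<circ> TT G) (dl 1 v) = (piR \<circ> (cl G \<circ> bar_d G)) (dl 1 v)"
      using v w by (simp add: T_dl1 tau_class f2_class Phi_def)
  qed
  then show ?thesis by simp
qed

end

context pqg
begin

abbreviation "C1 \<equiv> fsupp (cv G (Suc 0))"
abbreviation "C2 \<equiv> fsupp (cv G 2)"
abbreviation "Zc \<equiv> fsupp (conj_classes G)"

lemma B1_eq: "boundaries G (Suc 0) = bar_d G ` carrier C2"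
  by (simp add: boundaries_def chain_grp_cv numeral_2_eq_2)

lemma B2_eq: "boundaries G 2 = bar_d G ` carrier (fsupp (cv G 3))"
  by (simp add: boundaries_def chain_grp_cv numeral_3_eq_3 numeral_2_eq_2)

lemma B1_subgroup: "subgroup (boundaries G (Suc 0)) C1"
  unfolding B1_eq by (rule group_hom.img_is_subgroup[OF d21_ghom])

lemma B1_normal: "boundaries G (Suc 0) \<lhd> C1"
  by (rule fs.subgroup_imp_normal[OF B1_subgroup])

lemma B2_subgroup: "subgroup (boundaries G 2) C2"
proof -
  have "group_hom (fsupp (cv G 3)) C2 (bar_d G)"
    using d_ghom[of 2] by (simp add: numeral_3_eq_3 numeral_2_eq_2)
  then show ?thesis unfolding B2_eq by (rule group_hom.img_is_subgroup)
qed

lemma B2_normal: "boundaries G 2 \<lhd> C2"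
  by (rule fs.subgroup_imp_normal[OF B2_subgroup])

lemma H2_eq: "group_homology G 2 = (C2\<lparr>carrier := cycles G 2\<rparr>) Mod boundaries G 2"
  by (simp add: group_homology_def chain_grp_cv)

lemma cycles_1': "cycles G (Suc 0) = carrier C1"
  using cycles_1 by (simp add: chain_grp_cv)

lemma H1_eq: "group_homology G (Suc 0) = C1 Mod boundaries G (Suc 0)"
  by (simp add: group_homology_def chain_grp_cv cycles_1' FactGroup_def RCOSETS_def set_mult_def fun_eq_iff)

lemma H1_group: "group (C1 Mod boundaries G (Suc 0))"
  by (rule normal.factorgroup_is_group[OF B1_normal])

lemma cycles2_sub: "cycles G 2 \<subseteq> carrier C2"
  by (auto simp: cycles_def chain_grp_cv)

abbreviation "pi1 \<equiv> (\<lambda>x. boundaries G (Suc 0) #>\<^bsub>C1\<^esub> x)"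

lemma pi1_hom: "pi1 \<in> hom C1 (C1 Mod boundaries G (Suc 0))"
  by (rule normal.r_coset_hom_Mod[OF B1_normal])

lemma pi1_B: "x \<in> boundaries G (Suc 0) \<Longrightarrow> pi1 x = boundaries G (Suc 0)"
  using fs.coset_join2[OF _ B1_subgroup] subgroup.mem_carrier[OF B1_subgroup] by blast

lemma pi1_eq_B: "x \<in> carrier C1 \<Longrightarrow> pi1 x = boundaries G (Suc 0) \<Longrightarrow> x \<in> boundaries G (Suc 0)"
  using fs.rcos_self[OF _ B1_subgroup] by force

lemma Gd_B1: "Gd \<subseteq> boundaries G (Suc 0)"
  unfolding B1_eq by (auto simp: kernel_def)

lemma B1_add: "x \<in> boundaries G (Suc 0) \<Longrightarrow> y \<in> boundaries G (Suc 0) \<Longrightarrow> (\<lambda>p. x p + y p) \<in> boundaries G (Suc 0)"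
  using subgroup.m_closed[OF B1_subgroup, of x y] by simp

lemma B1_neg: "x \<in> boundaries G (Suc 0) \<Longrightarrow> (\<lambda>p. - x p) \<in> boundaries G (Suc 0)"
  using subgroup.m_inv_closed[OF B1_subgroup, of x] subgroup.mem_carrier[OF B1_subgroup, of x] by simp

lemma rho_cl_B1:
  assumes y: "y \<in> boundaries G (Suc 0)"
  shows "rho G (cl G y) \<in> boundaries G (Suc 0)"
proof -
  have yc: "y \<in> carrier C1" using y subgroup.mem_carrier[OF B1_subgroup] by blast
  have rc: "rho G (cl G y) \<in> carrier C1"
    using group_hom.hom_closed[OF rho_ghom group_hom.hom_closed[OF cl_ghom yc]] .
  have d: "(\<lambda>p. y p + - rho G (cl G y) p) \<in> boundaries G (Suc 0)" using lemma_i[OF yc] Gd_B1 rc by auto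
  have eq: "(\<lambda>p. - (y p + - rho G (cl G y) p) + y p) = rho G (cl G y)" by (simp add: fun_eq_iff)
  show ?thesis using B1_add[OF B1_neg[OF d] y] eq by simp
qed

definition h3 :: "('a set \<Rightarrow> int) \<Rightarrow> ('a list \<Rightarrow> int) set" where "h3 F = pi1 (rho G F)"

lemma h3_hom: "h3 \<in> hom Zc (C1 Mod boundaries G (Suc 0))"
  unfolding h3_def using Group.hom_compose[OF rho_hom pi1_hom] by (simp add: comp_def)

lemma h3_RR: "n \<in> RR \<Longrightarrow> h3 n = \<one>\<^bsub>C1 Mod boundaries G (Suc 0)\<^esub>"
proof -
  assume n: "n \<in> RR"
  have gh: "group_hom Zc (C1 Mod boundaries G (Suc 0)) h3"
    by (simp add: group_hom_def group_hom_axioms_def h3_hom H1_group fs.is_group)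
  have "Rset G \<subseteq> kernel Zc (C1 Mod boundaries G (Suc 0)) h3"
  proof
    fix r assume "r \<in> Rset G"
    then obtain a k where r: "r = B_rel G a k" "a \<in> carrier G" by (auto simp: Rset_def)
    have y: "(\<lambda>p. dl k [a] p - dl 1 [a [^] k] p) \<in> boundaries G (Suc 0)" using Qn[OF r(2)] Gd_B1 by blast
    have "rho G r \<in> boundaries G (Suc 0)" using rho_cl_B1[OF y] B_rel_cl[OF r(2)] r(1) by simp
    then have "h3 r = \<one>\<^bsub>C1 Mod boundaries G (Suc 0)\<^esub>" unfolding h3_def using pi1_B by (simp add: FactGroup_def)
    then show "r \<in> kernel Zc (C1 Mod boundaries G (Suc 0)) h3"
      using B_rel_carrier r by (simp add: kernel_def)
  qed
  then have "RR \<subseteq> kernel Zc (C1 Mod boundaries G (Suc 0)) h3"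
    by (rule fs.generate_subgroup_incl[OF _ group_hom.subgroup_kernel[OF gh]])
  then show ?thesis using n by (auto simp: kernel_def)
qed

definition f1 :: "('a list \<Rightarrow> int) set \<Rightarrow> 'a word set" where "f1 S = TT G (SOME x. x \<in> S)"
definition f3 :: "('a set \<Rightarrow> int) set \<Rightarrow> ('a list \<Rightarrow> int) set" where "f3 S = h3 (SOME x. x \<in> S)"

lemma f1_hom: "f1 \<in> hom (group_homology G 2) (A_grp G)"
  unfolding H2_eq f1_def
  by (rule lift_hom[OF fs.is_group B2_normal cycles2_sub A_group T_hom])
     (use TdZ B2_eq in auto)

lemma f1_val: "z \<in> carrier C2 \<Longrightarrow> f1 (boundaries G 2 #>\<^bsub>C2\<^esub> z) = TT G z"
  unfolding f1_def by (rule lift_val[OF fs.is_group B2_normal A_group T_hom]) (use TdZ B2_eq in auto)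

lemma f3_hom: "f3 \<in> hom (B_grp G) (group_homology G (Suc 0))"
proof -
  have "(\<lambda>S. h3 (SOME x. x \<in> S)) \<in> hom ((Zc\<lparr>carrier := carrier Zc\<rparr>) Mod RR) (C1 Mod boundaries G (Suc 0))"
    by (rule lift_hom[OF fs.is_group RR_normal _ H1_group h3_hom h3_RR]) auto
  moreover have "(Zc\<lparr>carrier := carrier Zc\<rparr>) Mod RR = Zc Mod RR"
    by (simp add: FactGroup_def RCOSETS_def)
  ultimately show ?thesis by (simp add: f3_def[abs_def] B_grp_eq H1_eq)
qed

lemma f3_val: "F \<in> carrier Zc \<Longrightarrow> f3 (piR F) = h3 F"
  unfolding f3_def by (rule lift_val[OF fs.is_group RR_normal H1_group h3_hom h3_RR])

lemma f2_hom': "f2 \<in> hom (A_grp G) (B_grp G)"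
  using f2_hom by (simp add: B_grp_eq)

end

context pqg
begin

lemma B_one: "\<one>\<^bsub>B_grp G\<^esub> = RR" by (simp add: B_grp_eq FactGroup_def)
lemma H1_one: "\<one>\<^bsub>group_homology G (Suc 0)\<^esub> = boundaries G (Suc 0)" by (simp add: H1_eq FactGroup_def)

lemma B_carrier: "carrier (B_grp G) = piR ` carrier Zc"
  by (auto simp: B_grp_eq FactGroup_def RCOSETS_def)
lemma H1_carrier: "carrier (group_homology G (Suc 0)) = pi1 ` carrier C1"
  by (auto simp: H1_eq FactGroup_def RCOSETS_def)
lemma H2_carrier: "carrier (group_homology G 2) = (\<lambda>z. boundaries G 2 #>\<^bsub>C2\<^esub> z) ` cycles G 2"
  by (simp add: H2_eq lift_carrier)

lemma A_class: "u \<in> carrier (A_grp G) \<Longrightarrow> \<exists>w\<in>pq_words G. u = pq_class G w \<and> eval_word G w = \<one>"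
  by (auto simp: A_carrier kernel_def GrPq_carrier eps_class)

lemma linw_B1:
  assumes w: "w \<in> pq_words G" and e: "eval_word G w = \<one>"
  obtains c where "c \<in> carrier C2" "bar_d G c = (\<lambda>p. linw w p - dl 1 [\<one>] p)"
    "pq_class G w = TT G c" "linw w \<in> boundaries G (Suc 0)"
proof -
  obtain c where c: "c \<in> carrier C2" "bar_d G c = (\<lambda>p. linw w p - dl 1 [eval_word G w] p)"
    "pq_class G w = sig G (eval_word G w) \<otimes>\<^bsub>GrPq G\<^esub> TT G c"
    using word_chain[OF w] by blast
  have tk: "TT G c \<in> carrier (GrPq G)" using TT_K[OF c(1)] KK_carrier by blast
  have u: "pq_class G w = TT G c" using c(3) e tk by (simp add: sig_one)
  have d: "bar_d G c \<in> boundaries G (Suc 0)" using c(1) B1_eq by auto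
  have o: "dl 1 [\<one>] \<in> boundaries G (Suc 0)" using Gd_one Gd_B1 by blast
  have "(\<lambda>p. bar_d G c p + dl 1 [\<one>] p) \<in> boundaries G (Suc 0)" by (rule B1_add[OF d o])
  moreover have "(\<lambda>p. bar_d G c p + dl 1 [\<one>] p) = linw w" using c(2) e by (simp add: fun_eq_iff)
  ultimately have "linw w \<in> boundaries G (Suc 0)" by simp
  then show ?thesis using that c(1,2) e u by simp
qed

lemma E1: "f1 ` carrier (group_homology G 2) = kernel (A_grp G) (B_grp G) f2"
proof (intro Set.set_eqI iffI)
  fix u assume "u \<in> f1 ` carrier (group_homology G 2)"
  then obtain z where z: "z \<in> cycles G 2" "u = f1 (boundaries G 2 #>\<^bsub>C2\<^esub> z)" by (auto simp: H2_carrier)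
  have zc: "z \<in> carrier C2" and dz: "bar_d G z = (\<lambda>_. 0)" using z by (auto simp: cycles_def chain_grp_cv)
  have u: "u = TT G z" using f1_val[OF zc] z by simp
  have uc: "u \<in> carrier (A_grp G)" using group_hom.hom_closed[OF T_ghom zc] u by simp
  have "cl G (\<lambda>_. 0) = \<one>\<^bsub>Zc\<^esub>" using group_hom.hom_one[OF cl_ghom] by simp
  then have "f2 u = RR" using u F2T[OF zc] dz piR_RR[OF subgroup.one_closed[OF RR_subgroup]] by simp
  then show "u \<in> kernel (A_grp G) (B_grp G) f2" using uc by (simp add: kernel_def B_one)
next
  fix u assume uk: "u \<in> kernel (A_grp G) (B_grp G) f2"
  then have uc: "u \<in> carrier (A_grp G)" and fu: "f2 u = RR" by (auto simp: kernel_def B_one)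
  obtain w where w: "w \<in> pq_words G" "u = pq_class G w" "eval_word G w = \<one>" using A_class[OF uc] by blast
  obtain c where c: "c \<in> carrier C2" "bar_d G c = (\<lambda>p. linw w p - dl 1 [\<one>] p)" "pq_class G w = TT G c"
    using linw_B1[OF w(1) w(3)] by blast
  have lr: "cl G (linw w) \<in> RR" using fu w f2_class piR_eq_RR[OF cl_linw_carrier[OF w(1)]] by (simp add: Phi_def)
  let ?x = "bar_d G c"
  have xc: "?x \<in> carrier C1" using bar_d2_carrier[OF c(1)] .
  have lc: "linw w \<in> carrier C1" using lin_carrier[OF w(1)] .
  have xe: "?x = linw w \<otimes>\<^bsub>C1\<^esub> inv\<^bsub>C1\<^esub> dl 1 [\<one>]" using c(2) by simp
  have "cl G ?x = cl G (linw w) \<otimes>\<^bsub>Zc\<^esub> inv\<^bsub>Zc\<^esub> dl 1 (conj_class G \<one>)"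
    unfolding xe using lc group_hom.hom_mult[OF cl_ghom] group_hom.hom_inv[OF cl_ghom]
    by (simp del: fsupp_mult fsupp_inv add: cl_dl1)
  moreover have "dl 1 (conj_class G \<one>) \<in> RR"
  proof -
    have "inv\<^bsub>Zc\<^esub> B_rel G \<one> 0 \<in> RR" using subgroup.m_inv_closed[OF RR_subgroup Rset_RR[of \<one> 0]] by simp
    moreover have "inv\<^bsub>Zc\<^esub> B_rel G \<one> 0 = dl 1 (conj_class G \<one>)"
      using B_rel_carrier[of \<one> 0] by (simp add: B_rel_def dl_def fun_eq_iff)
    ultimately show ?thesis by simp
  qed
  ultimately have "cl G ?x \<in> RR"
    using subgroup.m_closed[OF RR_subgroup lr subgroup.m_inv_closed[OF RR_subgroup]] by simp
  then have "?x \<in> Gd" by (rule Good[OF xc])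
  then obtain q where q: "q \<in> carrier C2" "TT G q = \<one>\<^bsub>A_grp G\<^esub>" "bar_d G q = ?x" using Gd_elim by blast
  let ?z = "c \<otimes>\<^bsub>C2\<^esub> inv\<^bsub>C2\<^esub> q"
  have zc: "?z \<in> carrier C2" using c(1) q(1) by (simp del: fsupp_mult fsupp_inv)
  have "bar_d G ?z = bar_d G c \<otimes>\<^bsub>C1\<^esub> inv\<^bsub>C1\<^esub> bar_d G q"
    using c(1) q(1) group_hom.hom_mult[OF d21_ghom] group_hom.hom_inv[OF d21_ghom]
    by (simp del: fsupp_mult fsupp_inv)
  also have "\<dots> = \<one>\<^bsub>C1\<^esub>" using q(3) xc by (simp only: fs.r_inv)
  finally have dz: "bar_d G ?z = (\<lambda>_. 0)" by simp
  have zcy: "?z \<in> cycles G 2" using zc dz by (simp add: cycles_def chain_grp_cv)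
  have "TT G ?z = TT G c \<otimes>\<^bsub>A_grp G\<^esub> inv\<^bsub>A_grp G\<^esub> TT G q"
    using c(1) q(1) group_hom.hom_mult[OF T_ghom] group_hom.hom_inv[OF T_ghom]
    by (simp del: fsupp_mult fsupp_inv)
  also have "\<dots> = TT G c" using q(2) group_hom.hom_closed[OF T_ghom c(1)]
    by (simp add: monoid.inv_one[OF group.is_monoid[OF A_group]] monoid.r_one[OF group.is_monoid[OF A_group]])
  finally have "TT G ?z = u" using c(3) w(2) by simp
  then have "f1 (boundaries G 2 #>\<^bsub>C2\<^esub> ?z) = u" using f1_val[OF zc] by simp
  moreover have "boundaries G 2 #>\<^bsub>C2\<^esub> ?z \<in> carrier (group_homology G 2)"
    using zcy by (simp add: H2_carrier)
  ultimately show "u \<in> f1 ` carrier (group_homology G 2)" by (metis image_eqI)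
qed

lemma E2: "f2 ` carrier (A_grp G) = kernel (B_grp G) (group_homology G (Suc 0)) f3"
proof (intro Set.set_eqI iffI)
  fix S assume "S \<in> f2 ` carrier (A_grp G)"
  then obtain u where uc: "u \<in> carrier (A_grp G)" and S: "S = f2 u" by blast
  obtain w where w: "w \<in> pq_words G" "u = pq_class G w" "eval_word G w = \<one>" using A_class[OF uc] by blast
  obtain c where "linw w \<in> boundaries G (Suc 0)" using linw_B1[OF w(1) w(3)] by blast
  then have rB: "rho G (cl G (linw w)) \<in> boundaries G (Suc 0)" by (rule rho_cl_B1)
  have S2: "S = piR (cl G (linw w))" using S w f2_class by (simp add: Phi_def)
  have "f3 S = h3 (cl G (linw w))" using S2 f3_val[OF cl_linw_carrier[OF w(1)]] by simp
  also have "\<dots> = boundaries G (Suc 0)" unfolding h3_def using pi1_B[OF rB] .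
  finally have "f3 S = \<one>\<^bsub>group_homology G (Suc 0)\<^esub>" by (simp add: H1_one)
  moreover have "S \<in> carrier (B_grp G)" using S uc hom_in_carrier[OF f2_hom'] by blast
  ultimately show "S \<in> kernel (B_grp G) (group_homology G (Suc 0)) f3" by (simp add: kernel_def)
next
  fix S assume "S \<in> kernel (B_grp G) (group_homology G (Suc 0)) f3"
  then have Sc: "S \<in> carrier (B_grp G)" and fS: "f3 S = boundaries G (Suc 0)" by (auto simp: kernel_def H1_one)
  obtain F where F: "F \<in> carrier Zc" "S = piR F" using Sc by (auto simp: B_carrier)
  have rc: "rho G F \<in> carrier C1" using group_hom.hom_closed[OF rho_ghom F(1)] .
  have "pi1 (rho G F) = boundaries G (Suc 0)" using fS F f3_val[OF F(1)] by (simp add: h3_def)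
  then have "rho G F \<in> boundaries G (Suc 0)" by (rule pi1_eq_B[OF rc])
  then obtain b where b: "b \<in> carrier C2" "rho G F = bar_d G b" by (auto simp: B1_eq)
  have uc: "TT G b \<in> carrier (A_grp G)" using group_hom.hom_closed[OF T_ghom b(1)] .
  have "f2 (TT G b) = piR (cl G (bar_d G b))" by (rule F2T[OF b(1)])
  also have "\<dots> = S" using b(2) cl_rho[OF F(1)] F(2) by simp
  finally show "S \<in> f2 ` carrier (A_grp G)" using uc by (metis image_eqI)
qed

lemma E3: "f3 ` carrier (B_grp G) = carrier (group_homology G (Suc 0))"
proof (intro Set.set_eqI iffI)
  fix Y assume "Y \<in> f3 ` carrier (B_grp G)"
  then show "Y \<in> carrier (group_homology G (Suc 0))" using hom_in_carrier[OF f3_hom] by auto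
next
  fix Y assume "Y \<in> carrier (group_homology G (Suc 0))"
  then obtain x where x: "x \<in> carrier C1" "Y = pi1 x" by (auto simp: H1_carrier)
  have clc: "cl G x \<in> carrier Zc" using group_hom.hom_closed[OF cl_ghom x(1)] .
  have rc: "rho G (cl G x) \<in> carrier C1" using group_hom.hom_closed[OF rho_ghom clc] .
  have "x \<otimes>\<^bsub>C1\<^esub> inv\<^bsub>C1\<^esub> rho G (cl G x) \<in> boundaries G (Suc 0)" using lemma_i[OF x(1)] Gd_B1 by blast
  then have "x \<in> boundaries G (Suc 0) #>\<^bsub>C1\<^esub> rho G (cl G x)"
    by (rule subgroup.rcos_module_rev[OF B1_subgroup fs.is_group rc x(1)])
  then have "pi1 (rho G (cl G x)) = pi1 x"
    by (rule fs.repr_independence[OF _ rc B1_subgroup])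
  then have "f3 (piR (cl G x)) = Y" using f3_val[OF clc] x(2) by (simp add: h3_def)
  moreover have "piR (cl G x) \<in> carrier (B_grp G)" using clc by (simp add: B_carrier)
  ultimately show "Y \<in> f3 ` carrier (B_grp G)" by (metis image_eqI)
qed

end

theorem mainTheorem10:
  fixes G :: "('a, 'b) monoid_scheme"
  assumes "group G"
  shows "\<exists>f1 f2 f3.
     f1 \<in> hom (group_homology G 2) (A_grp G) \<and>
     f2 \<in> hom (A_grp G) (B_grp G) \<and>
     f3 \<in> hom (B_grp G) (group_homology G 1) \<and>
     f1 ` carrier (group_homology G 2) = kernel (A_grp G) (B_grp G) f2 \<and>
     f2 ` carrier (A_grp G) = kernel (B_grp G) (group_homology G 1) f3 \<and>
     f3 ` carrier (B_grp G) = carrier (group_homology G 1)"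
proof -
  interpret pqg G using assms by (simp add: pqg_def)
  show ?thesis
    using f1_hom f2_hom' f3_hom E1 E2 E3 unfolding One_nat_def by blast
qed

end
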